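(* Let $H$ be a separable Hilbert space, let $h$ and $k$ be self-adjoint operators on $H$, and let $w_{h,k}\colon\mathbb{R}\to\mathcal{B}(H)$, $w_{h,k}(t)=e^{ith}e^{-itk}$. Consider the statements: (a) $w_{h,k}$ is differentiable at $0$ in the norm topology of $\mathcal{B}(H)$; (b) $w_{h,k}$ is strongly differentiable at $0$, i.e. $t\mapsto e^{ith}e^{-itk}\xi$ is differentiable at $0$ for every $\xi\in H$; (c) $\mathrm{dom}(h)=\mathrm{dom}(k)$ and $h-k$ is bounded on this common domain; (d) $H$ contains a dense subspace $D\subseteq\mathrm{dom}(h)\cap\mathrm{dom}(k)$ such that $h-k$ is bounded on $D$ and $e^{itk}D\subseteq D$ for all $t\in\mathbb{R}$; (e) $w_{h,k}$ is Lipschitz continuous (in operator norm). Then (a) implies (b), (b) implies (c), (c) implies (d), and (d) implies (e). *)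

theory Defs
  imports "HOL-Analysis.Analysis"
begin

text \<open>A complex inner product space is presented as a real inner product space
  together with a complex scalar multiplication extending the real one, such that
  multiplication by the imaginary unit is orthogonal. The real inner product is the
  real part of the complex inner product; the complex inner product (conjugate-linear
  in the first argument) is recovered as cinner below.\<close>

class complex_inner = real_inner +
  fixes scaleC :: "complex \<Rightarrow> 'a \<Rightarrow> 'a" (infixr \<open>*\<^sub>C\<close> 75)
  assumes scaleC_add_right: "a *\<^sub>C (x + y) = a *\<^sub>C x + a *\<^sub>C y"
    and scaleC_add_left: "(a + b) *\<^sub>C x = a *\<^sub>C x + b *\<^sub>C x"
    and scaleC_scaleC: "a *\<^sub>C (b *\<^sub>C x) = (a * b) *\<^sub>C x"
    and scaleC_one: "1 *\<^sub>C x = x"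
    and scaleC_of_real: "complex_of_real r *\<^sub>C x = r *\<^sub>R x"
    and inner_scaleC_ii: "inner (\<i> *\<^sub>C x) (\<i> *\<^sub>C y) = inner x y"

text \<open>Complex inner product, linear in the second and conjugate-linear in the first argument.\<close>
definition cinner :: "'a::complex_inner \<Rightarrow> 'a \<Rightarrow> complex" where
  "cinner x y = Complex (inner x y) (- inner x (\<i> *\<^sub>C y))"

definition separable_space :: "'a::metric_space itself \<Rightarrow> bool" where
  "separable_space _ \<longleftrightarrow> (\<exists>S::'a set. countable S \<and> closure S = UNIV)"

definition csubspace :: "'a::complex_inner set \<Rightarrow> bool" where
  "csubspace S \<longleftrightarrow> 0 \<in> S \<and> (\<forall>x\<in>S. \<forall>y\<in>S. x + y \<in> S) \<and> (\<forall>a. \<forall>x\<in>S. a *\<^sub>C x \<in> S)"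

text \<open>An operator is given by its domain D and a function h (values outside D are irrelevant).\<close>

definition clinear_on :: "'a::complex_inner set \<Rightarrow> ('a \<Rightarrow> 'a) \<Rightarrow> bool" where
  "clinear_on D h \<longleftrightarrow> csubspace D \<and>
     (\<forall>x\<in>D. \<forall>y\<in>D. h (x + y) = h x + h y) \<and> (\<forall>a. \<forall>x\<in>D. h (a *\<^sub>C x) = a *\<^sub>C h x)"

definition adjoint_dom :: "'a::complex_inner set \<Rightarrow> ('a \<Rightarrow> 'a) \<Rightarrow> 'a set" where
  "adjoint_dom D h = {y. \<exists>z. \<forall>x\<in>D. cinner (h x) y = cinner x z}"

text \<open>(D, h) is self-adjoint: densely defined, linear, symmetric, and the adjoint has
  the same domain (hence equals h, by density).\<close>
definition self_adjoint_op :: "'a::complex_inner set \<Rightarrow> ('a \<Rightarrow> 'a) \<Rightarrow> bool" where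
  "self_adjoint_op D h \<longleftrightarrow> clinear_on D h \<and> closure D = UNIV \<and>
     (\<forall>x\<in>D. \<forall>y\<in>D. cinner (h x) y = cinner x (h y)) \<and> adjoint_dom D h = D"

definition unitary_op :: "('a::complex_inner \<Rightarrow>\<^sub>L 'a) \<Rightarrow> bool" where
  "unitary_op U \<longleftrightarrow> (\<forall>a x. U (a *\<^sub>C x) = a *\<^sub>C U x) \<and> (\<forall>x. norm (U x) = norm x)
     \<and> surj (blinfun_apply U)"

definition unitary_group :: "(real \<Rightarrow> ('a::complex_inner \<Rightarrow>\<^sub>L 'a)) \<Rightarrow> bool" where
  "unitary_group U \<longleftrightarrow> (\<forall>t. unitary_op (U t)) \<and> U 0 = id_blinfun \<and>
     (\<forall>s t. U (s + t) = U s o\<^sub>L U t) \<and> (\<forall>x. continuous_on UNIV (\<lambda>t. U t x))"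

text \<open>U is generated by (D, h) in the sense of Stone's theorem: D is exactly the set of
  vectors x for which t \<mapsto> U t x is differentiable at 0, and the derivative there is i h x.
  (So U t = e^{ith}.)\<close>
definition generated_by :: "(real \<Rightarrow> ('a::complex_inner \<Rightarrow>\<^sub>L 'a)) \<Rightarrow> 'a set \<Rightarrow> ('a \<Rightarrow> 'a) \<Rightarrow> bool" where
  "generated_by U D h \<longleftrightarrow>
     D = {x. (\<lambda>t. U t x) differentiable (at 0)} \<and>
     (\<forall>x\<in>D. ((\<lambda>t. U t x) has_vector_derivative (\<i> *\<^sub>C h x)) (at 0))"

text \<open>e^{ith}, defined as the (by Stone's theorem unique) strongly continuous unitary group
  generated by the self-adjoint operator (D, h).\<close>
definition exp_ith :: "'a::complex_inner set \<Rightarrow> ('a \<Rightarrow> 'a) \<Rightarrow> real \<Rightarrow> ('a \<Rightarrow>\<^sub>L 'a)" where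
  "exp_ith D h = (THE U. unitary_group U \<and> generated_by U D h)"

definition w_op :: "'a::complex_inner set \<Rightarrow> ('a \<Rightarrow> 'a) \<Rightarrow> 'a set \<Rightarrow> ('a \<Rightarrow> 'a) \<Rightarrow> real \<Rightarrow> ('a \<Rightarrow>\<^sub>L 'a)" where
  "w_op Dh h Dk k t = exp_ith Dh h t o\<^sub>L exp_ith Dk k (- t)"

end

theory Submission
  imports Defs
begin

lemma scaleC_zero_left[simp]: "(0::complex) *\<^sub>C x = 0"
  using scaleC_of_real[of 0 x] by simp

lemma scaleC_real[simp]: "complex_of_real r *\<^sub>C x = r *\<^sub>R x"
  by (rule scaleC_of_real)

lemma scaleC_zero_right[simp]: "a *\<^sub>C (0::'a::complex_inner) = 0"
  using scaleC_add_right[of a 0 0] by simp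

lemma scaleC_minus_right: "a *\<^sub>C (- x::'a::complex_inner) = - (a *\<^sub>C x)"
  using scaleC_add_right[of a x "-x"] by (simp add: eq_neg_iff_add_eq_0 add.commute)

lemma scaleC_diff_right: "a *\<^sub>C (x - y::'a::complex_inner) = a *\<^sub>C x - a *\<^sub>C y"
  using scaleC_add_right[of a x "-y"] by (simp add: scaleC_minus_right)

lemma scaleC_scaleR_right: "a *\<^sub>C (r *\<^sub>R x::'a::complex_inner) = r *\<^sub>R (a *\<^sub>C x)"
  by (metis scaleC_of_real scaleC_scaleC mult.commute)

lemma scaleC_ii[simp]: "\<i> *\<^sub>C (\<i> *\<^sub>C (x::'a::complex_inner)) = - x"
proof -
  have "\<i> *\<^sub>C (\<i> *\<^sub>C x) = complex_of_real (-1) *\<^sub>C x" by (simp only: scaleC_scaleC) simp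
  also have "\<dots> = - x" by (simp only: scaleC_of_real) simp
  finally show ?thesis .
qed

lemma inner_ii_left: "inner (\<i> *\<^sub>C x) (y::'a::complex_inner) = - inner x (\<i> *\<^sub>C y)"
  using inner_scaleC_ii[of "\<i> *\<^sub>C x" y] by simp

lemma inner_ii_self[simp]: "inner x (\<i> *\<^sub>C (x::'a::complex_inner)) = 0"
  using inner_ii_left[of x x] by (simp add: inner_commute)

lemma norm_ii[simp]: "norm (\<i> *\<^sub>C (x::'a::complex_inner)) = norm x"
  by (simp add: norm_eq_sqrt_inner inner_scaleC_ii)

lemma linear_ii: "linear (\<lambda>x::'a::complex_inner. \<i> *\<^sub>C x)"
  by (rule linearI) (simp_all add: scaleC_add_right scaleC_scaleR_right)

lemma bounded_linear_ii: "bounded_linear (\<lambda>x::'a::complex_inner. \<i> *\<^sub>C x)"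
  by (rule bounded_linear_intro[where K=1]) (simp_all add: scaleC_add_right scaleC_scaleR_right)

typedef (overloaded) 'a bop = "UNIV :: (('a::real_normed_vector \<Rightarrow>\<^sub>L 'a) \<times> real) set" by simp

setup_lifting type_definition_bop

instantiation bop :: (real_normed_vector) real_vector
begin
lift_definition zero_bop :: "'a bop" is "0" .
lift_definition plus_bop :: "'a bop \<Rightarrow> 'a bop \<Rightarrow> 'a bop" is "(+)" .
lift_definition minus_bop :: "'a bop \<Rightarrow> 'a bop \<Rightarrow> 'a bop" is "(-)" .
lift_definition uminus_bop :: "'a bop \<Rightarrow> 'a bop" is "uminus" .
lift_definition scaleR_bop :: "real \<Rightarrow> 'a bop \<Rightarrow> 'a bop" is "scaleR" .
instance
proof
  fix x y z :: "'a bop" and a b :: real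
  show "x + y + z = x + (y + z)" by transfer (simp add: add.assoc)
  show "x + y = y + x" by transfer (simp add: add.commute)
  show "0 + x = x" by transfer simp
  show "- x + x = 0" by transfer simp
  show "x - y = x + - y" by transfer simp
  show "a *\<^sub>R (x + y) = a *\<^sub>R x + a *\<^sub>R y" by transfer (simp add: scaleR_add_right)
  show "(a + b) *\<^sub>R x = a *\<^sub>R x + b *\<^sub>R x" by transfer (simp add: scaleR_add_left)
  show "a *\<^sub>R b *\<^sub>R x = (a * b) *\<^sub>R x" by transfer simp
  show "1 *\<^sub>R x = x" by transfer simp
qed
end

instantiation bop :: (real_normed_vector) real_normed_vector
begin
lift_definition norm_bop :: "'a bop \<Rightarrow> real" is "\<lambda>(A,r). max (norm A) \<bar>r\<bar>" .
definition dist_bop :: "'a bop \<Rightarrow> 'a bop \<Rightarrow> real" where "dist_bop x y = norm (x - y)"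
definition sgn_bop :: "'a bop \<Rightarrow> 'a bop" where "sgn_bop x = x /\<^sub>R norm x"
definition uniformity_bop :: "('a bop \<times> 'a bop) filter" where
  "uniformity_bop = (INF e\<in>{0<..}. principal {(x, y). dist x y < e})"
definition open_bop :: "'a bop set \<Rightarrow> bool" where
  "open_bop U = (\<forall>x\<in>U. \<forall>\<^sub>F (x', y) in uniformity. x' = x \<longrightarrow> y \<in> U)"
instance
proof
  fix x y z :: "'a bop" and a b :: real
  show "dist x y = norm (x - y)" by (simp add: dist_bop_def)
  show "sgn x = x /\<^sub>R norm x" by (simp add: sgn_bop_def)
  show "(uniformity :: ('a bop \<times> 'a bop) filter) = (INF e\<in>{0<..}. principal {(x, y). dist x y < e})"
    by (simp add: uniformity_bop_def)
  show "open U = (\<forall>x\<in>U. \<forall>\<^sub>F (x', y) in uniformity. x' = x \<longrightarrow> y \<in> U)" for U :: "'a bop set"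
    by (simp add: open_bop_def)
  show "(norm x = 0) = (x = 0)"
    by transfer (auto simp: max_def zero_prod_def split: if_splits)
  show "norm (x + y) \<le> norm x + norm y"
  proof transfer
    fix x y :: "('a \<Rightarrow>\<^sub>L 'a) \<times> real"
    obtain a b c d where xy: "x = (a,b)" "y = (c,d)" by fastforce
    have "norm (a + c) \<le> norm a + norm c" by (rule norm_triangle_ineq)
    moreover have "\<bar>b + d\<bar> \<le> \<bar>b\<bar> + \<bar>d\<bar>" by (rule abs_triangle_ineq)
    ultimately show "(case x + y of (A, r) \<Rightarrow> max (norm A) \<bar>r\<bar>)
       \<le> (case x of (A, r) \<Rightarrow> max (norm A) \<bar>r\<bar>) + (case y of (A, r) \<Rightarrow> max (norm A) \<bar>r\<bar>)"
      by (simp add: xy) linarith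
  qed
  show "norm (a *\<^sub>R x) = \<bar>a\<bar> * norm x"
    by transfer (auto simp: max_mult_distrib_left abs_mult)
qed
end

lemma norm_bop_Rep: "norm x = max (norm (fst (Rep_bop x))) \<bar>snd (Rep_bop x)\<bar>"
  by transfer (simp add: case_prod_unfold)

lemma norm_Rep_bop_le: "norm (Rep_bop x) \<le> 2 * norm x"
proof -
  have "norm (Rep_bop x) \<le> norm (fst (Rep_bop x)) + norm (snd (Rep_bop x))"
    by (metis norm_Pair_le prod.collapse)
  then show ?thesis unfolding norm_bop_Rep by simp
qed

lemma norm_le_Rep_bop: "norm x \<le> norm (Rep_bop x)"
  unfolding norm_bop_Rep by (metis norm_fst_le norm_snd_le real_norm_def max.boundedI prod.collapse)

instantiation bop :: (real_normed_vector) real_normed_algebra_1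
begin
lift_definition times_bop :: "'a bop \<Rightarrow> 'a bop \<Rightarrow> 'a bop" is "\<lambda>x y. (fst x o\<^sub>L fst y, snd x * snd y)" .
lift_definition one_bop :: "'a bop" is "(id_blinfun, 1)" .
instance
proof
  fix x y z :: "'a bop" and a :: real
  show "x * y * z = x * (y * z)" by transfer (auto intro!: blinfun_eqI)
  show "1 * x = x" by transfer (auto intro!: blinfun_eqI)
  show "x * 1 = x" by transfer (auto intro!: blinfun_eqI)
  show "(x + y) * z = x * z + y * z" by transfer (auto intro!: blinfun_eqI simp: blinfun.bilinear_simps distrib_right)
  show "x * (y + z) = x * y + x * z" by transfer (auto intro!: blinfun_eqI simp: blinfun.bilinear_simps distrib_left)
  show "(0::'a bop) \<noteq> 1" by transfer (simp add: zero_prod_def)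
  show "a *\<^sub>R x * y = a *\<^sub>R (x * y)" by transfer (auto intro!: blinfun_eqI simp: blinfun.bilinear_simps)
  show "x * a *\<^sub>R y = a *\<^sub>R (x * y)" by transfer (auto intro!: blinfun_eqI simp: blinfun.bilinear_simps)
  show "norm (1::'a bop) = 1" by transfer (simp add: max_def norm_blinfun_id_le)
  show "norm (x * y) \<le> norm x * norm y"
  proof transfer
    fix x y :: "('a \<Rightarrow>\<^sub>L 'a) \<times> real"
    obtain a b c d where xy: "x = (a,b)" "y = (c,d)" by fastforce
    have "norm (a o\<^sub>L c) \<le> norm a * norm c" by (rule norm_blinfun_compose)
    also have "\<dots> \<le> max (norm a) \<bar>b\<bar> * max (norm c) \<bar>d\<bar>"
      by (intro mult_mono) auto
    finally have 1: "norm (a o\<^sub>L c) \<le> max (norm a) \<bar>b\<bar> * max (norm c) \<bar>d\<bar>" .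
    have "\<bar>b * d\<bar> \<le> max (norm a) \<bar>b\<bar> * max (norm c) \<bar>d\<bar>"
      unfolding abs_mult by (intro mult_mono) auto
    with 1 show "(case (fst x o\<^sub>L fst y, snd x * snd y) of (A, r) \<Rightarrow> max (norm A) \<bar>r\<bar>)
       \<le> (case x of (A, r) \<Rightarrow> max (norm A) \<bar>r\<bar>) * (case y of (A, r) \<Rightarrow> max (norm A) \<bar>r\<bar>)"
      by (simp add: xy)
  qed
qed
end

lemma blinfun_Cauchy_conv:
  fixes X :: "nat \<Rightarrow> 'a::real_normed_vector \<Rightarrow>\<^sub>L 'b::{real_normed_vector,complete_space}"
  assumes C: "Cauchy X"
  shows "convergent X"
proof -
  have "Cauchy (\<lambda>n. X n x)" for x
  proof (rule CauchyI)
    fix e :: real assume "e > 0"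
    then have "e / (norm x + 1) > 0" by (simp add: add_nonneg_pos)
    from CauchyD[OF C this] obtain M where M: "\<And>m n. m \<ge> M \<Longrightarrow> n \<ge> M \<Longrightarrow> norm (X m - X n) < e / (norm x + 1)"
      by auto
    show "\<exists>M. \<forall>m\<ge>M. \<forall>n\<ge>M. norm (X m x - X n x) < e"
    proof (intro exI allI impI)
      fix m n assume "m \<ge> M" "n \<ge> M"
      have "norm (X m x - X n x) = norm ((X m - X n) x)" by (simp add: blinfun.bilinear_simps)
      also have "\<dots> \<le> norm (X m - X n) * norm x" by (rule norm_blinfun)
      also have "\<dots> \<le> e / (norm x + 1) * norm x"
        using M[OF \<open>m \<ge> M\<close> \<open>n \<ge> M\<close>] by (intro mult_right_mono) auto
      also have "\<dots> < e"
      proof -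
        have "e * norm x < e * (norm x + 1)" using \<open>e > 0\<close> by simp
        moreover have "norm x + 1 > 0" by (simp add: add_nonneg_pos)
        ultimately show ?thesis by (simp add: divide_less_eq mult.commute)
      qed
      finally show "norm (X m x - X n x) < e" .
    qed
  qed
  then obtain v where v: "\<And>x. (\<lambda>n. X n x) \<longlonglongrightarrow> v x"
    unfolding Cauchy_convergent_iff convergent_def by metis
  obtain K where K: "K > 0" "\<And>n. norm (X n) \<le> K"
    using Cauchy_Bseq[OF C] unfolding Bseq_def by blast
  have bl: "bounded_linear v"
  proof
    fix x y and r::real
    from tendsto_add[OF v[of x] v [of y]] v[of "x + y", unfolded blinfun.bilinear_simps]
      tendsto_scaleR[OF tendsto_const[of r] v[of x]] v[of "r *\<^sub>R x", unfolded blinfun.bilinear_simps]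
    show "v (x + y) = v x + v y" "v (r *\<^sub>R x) = r *\<^sub>R v x"
      by (metis LIMSEQ_unique)+
    show "\<exists>K. \<forall>x. norm (v x) \<le> norm x * K"
    proof (intro exI allI)
      fix x
      have "norm (v x) \<le> K * norm x"
        by (rule tendsto_le[OF _ tendsto_const tendsto_norm[OF v]])
          (auto intro!: always_eventually order.trans[OF norm_blinfun] mult_right_mono K)
      thus "norm (v x) \<le> norm x * K" by (simp add: ac_simps)
    qed
  qed
  have "X \<longlonglongrightarrow> Blinfun v"
  proof (rule LIMSEQ_I)
    fix r::real assume "r > 0"
    then have "r/2 > 0" by simp
    from CauchyD[OF C this] obtain M where M: "\<And>m n. m \<ge> M \<Longrightarrow> n \<ge> M \<Longrightarrow> norm (X m - X n) < r/2"
      by metis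
    show "\<exists>no. \<forall>n\<ge>no. norm (X n - Blinfun v) < r"
    proof (intro exI allI impI)
      fix n assume n: "M \<le> n"
      have "norm (X n - Blinfun v) \<le> r/2"
      proof (rule norm_blinfun_bound)
        show "0 \<le> r/2" using \<open>r > 0\<close> by simp
        fix x
        have "norm (X n x - v x) \<le> r/2 * norm x"
        proof (rule tendsto_le[OF _ tendsto_const])
          show "(\<lambda>m. norm (X n x - X m x)) \<longlonglongrightarrow> norm (X n x - v x)"
            by (intro tendsto_intros v)
          show "\<forall>\<^sub>F m in sequentially. norm (X n x - X m x) \<le> r/2 * norm x"
            unfolding eventually_sequentially
          proof (intro exI allI impI)
            fix m assume "m \<ge> M"
            have "norm (X n x - X m x) = norm ((X n - X m) x)" by (simp add: blinfun.bilinear_simps)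
            also have "\<dots> \<le> norm (X n - X m) * norm x" by (rule norm_blinfun)
            also have "\<dots> \<le> r/2 * norm x" using M[OF n \<open>m \<ge> M\<close>] by (intro mult_right_mono) auto
            finally show "norm (X n x - X m x) \<le> r/2 * norm x" .
          qed
        qed simp
        then show "norm ((X n - Blinfun v) x) \<le> r/2 * norm x"
          by (simp add: blinfun.bilinear_simps bounded_linear_Blinfun_apply bl)
      qed
      then show "norm (X n - Blinfun v) < r" using \<open>r > 0\<close> by simp
    qed
  qed
  then show ?thesis by (auto simp: convergent_def)
qed

instance bop :: ("{real_normed_vector,complete_space}") banach
proof
  fix X :: "nat \<Rightarrow> 'a bop"
  assume C: "Cauchy X"
  have C1: "Cauchy (\<lambda>n. fst (Rep_bop (X n)))"
  proof (rule metric_CauchyI)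
    fix e :: real assume "e > 0"
    then obtain M where M: "\<forall>m\<ge>M. \<forall>n\<ge>M. dist (X m) (X n) < e"
      using C unfolding Cauchy_def by blast
    show "\<exists>M. \<forall>m\<ge>M. \<forall>n\<ge>M. dist (fst (Rep_bop (X m))) (fst (Rep_bop (X n))) < e"
    proof (intro exI allI impI)
      fix m n assume "m \<ge> M" "n \<ge> M"
      then have "norm (X m - X n) < e" using M by (simp add: dist_norm)
      then show "dist (fst (Rep_bop (X m))) (fst (Rep_bop (X n))) < e"
        by (simp add: dist_norm norm_bop_Rep minus_bop.rep_eq)
    qed
  qed
  have C2: "Cauchy (\<lambda>n. snd (Rep_bop (X n)))"
  proof (rule metric_CauchyI)
    fix e :: real assume "e > 0"
    then obtain M where M: "\<forall>m\<ge>M. \<forall>n\<ge>M. dist (X m) (X n) < e"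
      using C unfolding Cauchy_def by blast
    show "\<exists>M. \<forall>m\<ge>M. \<forall>n\<ge>M. dist (snd (Rep_bop (X m))) (snd (Rep_bop (X n))) < e"
    proof (intro exI allI impI)
      fix m n assume "m \<ge> M" "n \<ge> M"
      then have "norm (X m - X n) < e" using M by (simp add: dist_norm)
      then show "dist (snd (Rep_bop (X m))) (snd (Rep_bop (X n))) < e"
        by (simp add: dist_norm norm_bop_Rep minus_bop.rep_eq)
    qed
  qed
  obtain L1 where L1: "(\<lambda>n. fst (Rep_bop (X n))) \<longlonglongrightarrow> L1"
    using blinfun_Cauchy_conv[OF C1] convergent_def by blast
  obtain L2 where L2: "(\<lambda>n. snd (Rep_bop (X n))) \<longlonglongrightarrow> L2"
    using C2 Cauchy_convergent_iff convergent_def by blast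
  have "(\<lambda>n. X n - Abs_bop (L1, L2)) \<longlonglongrightarrow> 0"
  proof (rule Lim_null_comparison)
    show "\<forall>\<^sub>F n in sequentially. norm (X n - Abs_bop (L1, L2)) \<le>
        norm (fst (Rep_bop (X n)) - L1) + norm (snd (Rep_bop (X n)) - L2)"
      by (intro always_eventually allI) (simp add: norm_bop_Rep minus_bop.rep_eq Abs_bop_inverse)
    have "(\<lambda>n. norm (fst (Rep_bop (X n)) - L1) + norm (snd (Rep_bop (X n)) - L2)) \<longlonglongrightarrow> 0 + 0"
      by (intro tendsto_add tendsto_norm_zero LIM_zero L1 L2)
    then show "(\<lambda>n. norm (fst (Rep_bop (X n)) - L1) + norm (snd (Rep_bop (X n)) - L2)) \<longlonglongrightarrow> 0" by simp
  qed
  then have "X \<longlonglongrightarrow> Abs_bop (L1, L2)" by (rule LIM_zero_cancel)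
  then show "convergent X" by (auto simp: convergent_def)
qed

definition ap :: "'a::real_normed_vector bop \<Rightarrow> 'a \<Rightarrow> 'a" where
  "ap X x = fst (Rep_bop X) x"

definition mkop :: "('a::real_normed_vector \<Rightarrow>\<^sub>L 'a) \<Rightarrow> 'a bop" where
  "mkop A = Abs_bop (A, 0)"

lemma ap_mult[simp]: "ap (X * Y) x = ap X (ap Y x)"
  unfolding ap_def by transfer simp

lemma ap_one[simp]: "ap 1 x = x"
  unfolding ap_def by transfer simp

lemma ap_zero[simp]: "ap 0 x = 0"
  unfolding ap_def by transfer (simp add: zero_prod_def)

lemma ap_add[simp]: "ap (X + Y) x = ap X x + ap Y x"
  unfolding ap_def by transfer (simp add: blinfun.add_left)

lemma ap_diff[simp]: "ap (X - Y) x = ap X x - ap Y x"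
  unfolding ap_def by transfer (simp add: blinfun.diff_left)

lemma ap_minus[simp]: "ap (- X) x = - ap X x"
  unfolding ap_def by transfer (simp add: blinfun.minus_left)

lemma ap_scaleR[simp]: "ap (r *\<^sub>R X) x = r *\<^sub>R ap X x"
  unfolding ap_def by transfer (simp add: blinfun.scaleR_left)

lemma ap_mkop[simp]: "ap (mkop A) x = blinfun_apply A x"
  unfolding ap_def mkop_def by (simp add: Abs_bop_inverse)

lemma mkop_mult: "mkop (A o\<^sub>L B) = mkop A * mkop B"
  unfolding mkop_def by transfer simp

lemma ap_add_right: "ap X (x + y) = ap X x + ap X y"
  unfolding ap_def by (simp add: blinfun.add_right)

lemma ap_diff_right: "ap X (x - y) = ap X x - ap X y"
  unfolding ap_def by (simp add: blinfun.diff_right)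

lemma ap_minus_right: "ap X (- x) = - ap X x"
  unfolding ap_def by (simp add: blinfun.minus_right)

lemma ap_scaleR_right: "ap X (r *\<^sub>R x) = r *\<^sub>R ap X x"
  unfolding ap_def by (simp add: blinfun.scaleR_right)

lemma ap_zero_right[simp]: "ap X 0 = 0"
  unfolding ap_def by (simp add: blinfun.zero_right)

lemma bounded_linear_ap_right: "bounded_linear (ap X)"
  unfolding ap_def by (rule blinfun.bounded_linear_right)

lemma norm_ap_le: "norm (ap X x) \<le> norm X * norm x"
proof -
  have "norm (ap X x) \<le> norm (fst (Rep_bop X)) * norm x"
    unfolding ap_def by (rule norm_blinfun)
  also have "\<dots> \<le> norm X * norm x"
    by (intro mult_right_mono) (auto simp: norm_bop_Rep)
  finally show ?thesis .
qed

lemma bounded_linear_ap_left: "bounded_linear (\<lambda>X. ap X x)"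
  by (rule bounded_linear_intro[where K="norm x"]) (auto simp: mult.commute intro: order.trans[OF norm_ap_le])

lemma ap_vector_derivative:
  "(f has_vector_derivative f') F \<Longrightarrow> ((\<lambda>t. ap (f t) x) has_vector_derivative ap f' x) F"
  by (rule bounded_linear.has_vector_derivative[OF bounded_linear_ap_left])

lemma exp_commute:
  fixes X Y :: "'a::{real_normed_algebra_1,banach}"
  assumes "X * Y = Y * X"
  shows "exp X * Y = Y * exp X"
proof -
  have "\<And>n. X ^ n * Y = Y * X ^ n" using assms by (rule power_commuting_commutes)
  then show ?thesis
    by (simp add: exp_def suminf_mult[symmetric] summable_exp_generic suminf_mult2)
qed

lemma dense_closed_prop:
  assumes "closure S = UNIV" "closed {x. P x}" "\<forall>x\<in>S. P x"
  shows "P x"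
proof -
  have "S \<subseteq> {x. P x}" using assms(3) by auto
  then have "closure S \<subseteq> {x. P x}" using assms(2) by (rule closure_minimal)
  then show ?thesis using assms(1) by auto
qed

lemma parallelogram:
  fixes u v :: "'a::real_inner"
  shows "norm (u + v)^2 + norm (u - v)^2 = 2 * norm u ^2 + 2 * norm v ^2"
  by (simp add: power2_norm_eq_inner inner_add inner_diff inner_commute algebra_simps)

lemma proj_exists:
  fixes y :: "'a::{real_inner, complete_space}"
  assumes cl: "closed M" and z: "0 \<in> M" and add: "\<forall>a\<in>M. \<forall>b\<in>M. a + b \<in> M"
    and sc: "\<forall>r. \<forall>a\<in>M. r *\<^sub>R a \<in> M"
  shows "\<exists>p\<in>M. \<forall>m\<in>M. inner (y - p) m = 0"
proof -
  define d where "d = Inf ((\<lambda>m. norm (y - m)) ` M)"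
  have bdd: "bdd_below ((\<lambda>m. norm (y - m)) ` M)" by (auto intro: bdd_belowI[of _ 0])
  have dle: "d \<le> norm (y - m)" if "m \<in> M" for m
    unfolding d_def using bdd that by (auto intro: cInf_lower)
  have d0: "d \<ge> 0" using dle[OF z] z unfolding d_def
    by (metis (no_types, lifting) cInf_greatest empty_iff image_iff norm_ge_zero)
  define eps :: "nat \<Rightarrow> real" where "eps n = 1 / (real n + 1)" for n
  have eps_pos: "eps n > 0" for n by (simp add: eps_def)
  have eps_mono: "eps n \<le> eps N" if "N \<le> n" for n N
    unfolding eps_def using that by (simp add: frac_le)
  have "\<exists>m\<in>M. norm (y - m) < d + eps n" for n
  proof -
    have "Inf ((\<lambda>m. norm (y - m)) ` M) < d + eps n" using eps_pos[of n] by (simp add: d_def)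
    then show ?thesis using z by (subst (asm) cInf_less_iff[OF _ bdd]) auto
  qed
  then obtain s where sM: "\<And>n. s n \<in> M" and sd: "\<And>n. norm (y - s n) < d + eps n"
    by metis
  have key: "norm (a - b)^2 \<le> 2 * norm (y - a)^2 + 2 * norm (y - b)^2 - 4 * d^2"
    if "a \<in> M" "b \<in> M" for a b
  proof -
    have "(1/2) *\<^sub>R (a + b) \<in> M" using that add sc by auto
    then have "d \<le> norm (y - (1/2) *\<^sub>R (a + b))" by (rule dle)
    also have "norm (y - (1/2) *\<^sub>R (a + b)) = norm ((y - a) + (y - b)) / 2"
    proof -
      have "y = (1/2) *\<^sub>R y + (1/2) *\<^sub>R y" by (simp flip: scaleR_add_left)
      then have "y - (1/2) *\<^sub>R (a + b) = (1/2) *\<^sub>R ((y - a) + (y - b))" by (simp add: algebra_simps)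
      then show ?thesis by simp
    qed
    finally have "2 * d \<le> norm ((y - a) + (y - b))" by simp
    then have "(2 * d)^2 \<le> norm ((y - a) + (y - b))^2" using d0 by (intro power_mono) auto
    moreover have "norm ((y - a) + (y - b))^2 + norm ((y - a) - (y - b))^2 = 2 * norm (y - a)^2 + 2 * norm (y - b)^2"
      by (rule parallelogram)
    moreover have "(y - a) - (y - b) = b - a" by simp
    moreover have "norm (b - a) = norm (a - b)" by (rule norm_minus_commute)
    ultimately show ?thesis by (simp add: power_mult_distrib)
  qed
  have est: "norm (s n - s m)^2 \<le> 8 * d * eps N + 4 * (eps N)^2" if "N \<le> n" "N \<le> m" for n m N
  proof -
    have "norm (y - s n) \<le> d + eps N" using sd[of n] eps_mono[OF that(1)] by linarith
    then have 1: "norm (y - s n)^2 \<le> (d + eps N)^2" by (intro power_mono) auto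
    have "norm (y - s m) \<le> d + eps N" using sd[of m] eps_mono[OF that(2)] by linarith
    then have 2: "norm (y - s m)^2 \<le> (d + eps N)^2" by (intro power_mono) auto
    have "norm (s n - s m)^2 \<le> 2 * (d + eps N)^2 + 2 * (d + eps N)^2 - 4 * d^2"
      using key[OF sM sM, of n m] 1 2 by linarith
    then show ?thesis by (simp add: power2_eq_square algebra_simps)
  qed
  have epslim: "eps \<longlonglongrightarrow> 0"
    unfolding eps_def using LIMSEQ_inverse_real_of_nat
    by (simp add: inverse_eq_divide add.commute)
  have glim: "(\<lambda>N. 8 * d * eps N + 4 * (eps N)^2) \<longlonglongrightarrow> 0"
  proof -
    have "(\<lambda>N. 8 * d * eps N + 4 * (eps N)^2) \<longlonglongrightarrow> 8 * d * 0 + 4 * 0^2"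
      by (intro tendsto_intros epslim)
    then show ?thesis by simp
  qed
  have "Cauchy s"
  proof (rule metric_CauchyI)
    fix e :: real assume "e > 0"
    then have "e^2 > 0" by simp
    from order_tendstoD(2)[OF glim this] obtain N where N: "8 * d * eps N + 4 * (eps N)^2 < e^2"
      by (auto simp: eventually_sequentially)
    show "\<exists>M. \<forall>m\<ge>M. \<forall>n\<ge>M. dist (s m) (s n) < e"
    proof (intro exI allI impI)
      fix m n assume "N \<le> m" "N \<le> n"
      then have "norm (s m - s n)^2 < e^2" using est[of N m n] N by linarith
      then show "dist (s m) (s n) < e" using \<open>e > 0\<close>
        by (simp add: dist_norm power_less_imp_less_base)
    qed
  qed
  then obtain p where sp: "s \<longlonglongrightarrow> p" using Cauchy_convergent_iff convergent_def by blast
  have pM: "p \<in> M" using cl sM sp closed_sequentially by blast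
  have "norm (y - p) \<le> d"
  proof (rule tendsto_le[OF _ _ tendsto_norm[OF tendsto_diff[OF tendsto_const sp]]])
    show "(\<lambda>n. d + eps n) \<longlonglongrightarrow> d" using tendsto_add[OF tendsto_const epslim, of d] by simp
    show "\<forall>\<^sub>F n in sequentially. norm (y - s n) \<le> d + eps n" using sd by (simp add: less_imp_le)
  qed simp
  then have pmin: "norm (y - p) \<le> norm (y - m)" if "m \<in> M" for m using dle[OF that] by linarith
  have "inner (y - p) m = 0" if mM: "m \<in> M" for m
  proof -
    define c where "c = inner (y - p) m"
    define q where "q = norm m ^ 2"
    define t where "t = c / (q + 1)"
    have q0: "q \<ge> 0" by (simp add: q_def)
    have "p + t *\<^sub>R m \<in> M" using pM mM add sc by auto
    then have "norm (y - p)^2 \<le> norm (y - (p + t *\<^sub>R m))^2"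
      using pmin by (intro power_mono) auto
    also have "norm (y - (p + t *\<^sub>R m))^2 = norm ((y - p) - t *\<^sub>R m)^2"
      by (simp add: algebra_simps)
    also have "\<dots> = norm (y - p)^2 - 2 * t * c + t^2 * q"
      unfolding power2_norm_eq_inner q_def c_def
      by (simp add: inner_diff_left inner_diff_right inner_commute algebra_simps power2_eq_square)
    finally have "2 * t * c \<le> t^2 * q" by simp
    then have "2 * t * c * (q+1)^2 \<le> t^2 * q * (q+1)^2" by (rule mult_right_mono) simp
    moreover have "q + 1 \<noteq> 0" using q0 by simp
    then have "2 * t * c * (q+1)^2 = 2 * c^2 * (q + 1)" "t^2 * q * (q+1)^2 = c^2 * q"
      by (simp_all add: t_def power2_eq_square power_divide)
    ultimately have "2 * c^2 * (q + 1) \<le> c^2 * q" by simp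
    then have "c^2 * (q + 2) \<le> 0" by (simp add: algebra_simps)
    then have "c^2 \<le> 0" using q0 by (simp add: mult_le_0_iff)
    then show ?thesis by (simp add: c_def)
  qed
  then show ?thesis using pM by blast
qed

lemma const_norm:
  fixes g :: "real \<Rightarrow> 'a::real_inner"
  assumes d: "\<And>t. (g has_vector_derivative g' t) (at t)"
    and o: "\<And>t. inner (g' t) (g t) = 0"
  shows "norm (g t) = norm (g s)"
proof -
  have "\<exists>c. \<forall>x\<in>UNIV. inner (g x) (g x) = c"
  proof (rule has_derivative_zero_constant)
    fix x :: real
    have "((\<lambda>t. inner (g t) (g t)) has_derivative
        (\<lambda>h. inner (g x) (h *\<^sub>R g' x) + inner (h *\<^sub>R g' x) (g x))) (at x)"
      using d[of x] unfolding has_vector_derivative_def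
      by (intro has_derivative_inner) auto
    moreover have "(\<lambda>h. inner (g x) (h *\<^sub>R g' x) + inner (h *\<^sub>R g' x) (g x)) = (\<lambda>h. 0)"
      using o[of x] by (auto simp: inner_commute)
    ultimately show "((\<lambda>t. inner (g t) (g t)) has_derivative (\<lambda>h. 0)) (at x within UNIV)" by simp
  qed simp
  then have "inner (g t) (g t) = inner (g s) (g s)" by auto
  then show ?thesis by (simp add: norm_eq_sqrt_inner)
qed

lemma mvt_vec:
  fixes \<phi> :: "real \<Rightarrow> 'a::real_normed_vector"
  assumes d: "\<And>s. s \<in> closed_segment u t \<Longrightarrow> (\<phi> has_vector_derivative \<phi>' s) (at s)"
    and b: "\<And>s. s \<in> closed_segment u t \<Longrightarrow> norm (\<phi>' s) \<le> K"
  shows "norm (\<phi> t - \<phi> u) \<le> K * \<bar>t - u\<bar>"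
proof -
  have "norm (\<phi> t - \<phi> u) \<le> K * norm (t - u)"
  proof (rule differentiable_bound[where f'="\<lambda>s h. h *\<^sub>R \<phi>' s" and S="closed_segment u t"])
    show "convex (closed_segment u t)" by simp
    show "(\<phi> has_derivative (\<lambda>h. h *\<^sub>R \<phi>' s)) (at s within closed_segment u t)"
      if "s \<in> closed_segment u t" for s
      using d[OF that] unfolding has_vector_derivative_def by (rule has_derivative_at_withinI)
    show "onorm (\<lambda>h. h *\<^sub>R \<phi>' s) \<le> K" if "s \<in> closed_segment u t" for s
    proof -
      have "onorm (\<lambda>h. h *\<^sub>R \<phi>' s) = onorm (\<lambda>x::real. x) * norm (\<phi>' s)"
        using onorm_scaleR_left[OF bounded_linear_ident[where 'a=real], of "\<phi>' s"] by (simp add: id_def)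
      also have "\<dots> \<le> 1 * norm (\<phi>' s)" using onorm_id_le by (intro mult_right_mono) (auto simp: id_def)
      finally show ?thesis using b[OF that] by simp
    qed
  qed auto
  then show ?thesis by simp
qed

lemma dense_approx:
  assumes "closure S = UNIV" "e > 0"
  shows "\<exists>d\<in>S. dist x d < e"
proof -
  have "x \<in> closure S" using assms by simp
  then show ?thesis using assms(2) by (metis closure_approachable dist_commute)
qed

lemma strong_conv_dense:
  fixes T :: "nat \<Rightarrow> 'a::real_normed_vector \<Rightarrow> 'a"
  assumes dense: "closure S = UNIV"
    and bd: "\<And>n z. norm (T n z) \<le> norm z"
    and lin: "\<And>n x y. T n (x - y) = T n x - T n y"
    and conv: "\<And>d. d \<in> S \<Longrightarrow> (\<lambda>n. T n d) \<longlonglongrightarrow> d"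
  shows "(\<lambda>n. T n y) \<longlonglongrightarrow> y"
proof (rule LIMSEQ_I)
  fix e :: real assume "e > 0"
  then obtain d where dS: "d \<in> S" and yd: "dist y d < e/3"
    using dense_approx[OF dense, of "e/3"] by auto
  from LIMSEQ_D[OF conv[OF dS], of "e/3"] \<open>e > 0\<close>
  obtain N where N: "\<And>n. n \<ge> N \<Longrightarrow> norm (T n d - d) < e/3" by auto
  show "\<exists>N. \<forall>n\<ge>N. norm (T n y - y) < e"
  proof (intro exI allI impI)
    fix n assume "n \<ge> N"
    have "T n y - y = T n (y - d) + (T n d - d) + (d - y)" by (simp add: lin)
    then have "norm (T n y - y) \<le> norm (T n (y - d)) + norm (T n d - d) + norm (d - y)"
      by (metis norm_triangle_ineq order_trans add_right_mono)
    also have "\<dots> < e/3 + e/3 + e/3"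
      using bd[of n "y - d"] N[OF \<open>n \<ge> N\<close>] yd by (simp add: dist_norm norm_minus_commute)
    finally show "norm (T n y - y) < e" by simp
  qed
qed

lemma Re_cinner[simp]: "Re (cinner x y) = inner x y" by (simp add: cinner_def)
lemma Im_cinner[simp]: "Im (cinner x y) = - inner x (\<i> *\<^sub>C y)" by (simp add: cinner_def)

lemma ii_inj: "\<i> *\<^sub>C x = \<i> *\<^sub>C y \<longleftrightarrow> x = (y::'a::complex_inner)"
  by (metis scaleC_ii neg_equal_iff_equal)

lemma scaleC_decomp: "a *\<^sub>C (x::'a::complex_inner) = Re a *\<^sub>R x + Im a *\<^sub>R (\<i> *\<^sub>C x)"
proof -
  have "a = complex_of_real (Re a) + complex_of_real (Im a) * \<i>" by (simp add: complex_eq_iff)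
  then have "a *\<^sub>C x = (complex_of_real (Re a) + complex_of_real (Im a) * \<i>) *\<^sub>C x" by simp
  also have "\<dots> = Re a *\<^sub>R x + Im a *\<^sub>R (\<i> *\<^sub>C x)"
    by (simp only: scaleC_add_left scaleC_scaleC[symmetric] scaleC_of_real)
  finally show ?thesis .
qed

locale sa =
  fixes D :: "'a::{complex_inner,complete_space} set" and h :: "'a \<Rightarrow> 'a"
  assumes sa: "self_adjoint_op D h"
begin

lemma dense: "closure D = UNIV" using sa by (simp add: self_adjoint_op_def)
lemma csub: "csubspace D" using sa by (simp add: self_adjoint_op_def clinear_on_def)
lemma D0[simp]: "0 \<in> D" using csub by (simp add: csubspace_def)
lemma Dadd: "x \<in> D \<Longrightarrow> y \<in> D \<Longrightarrow> x + y \<in> D" using csub by (simp add: csubspace_def)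
lemma DscaleC: "x \<in> D \<Longrightarrow> a *\<^sub>C x \<in> D" using csub by (simp add: csubspace_def)
lemma DscaleR: "x \<in> D \<Longrightarrow> r *\<^sub>R x \<in> D" using DscaleC[of x "complex_of_real r"] by simp
lemma Dminus: "x \<in> D \<Longrightarrow> - x \<in> D" using DscaleR[of x "-1"] by simp
lemma Ddiff: "x \<in> D \<Longrightarrow> y \<in> D \<Longrightarrow> x - y \<in> D" using Dadd Dminus by (metis diff_conv_add_uminus)
lemma Dii: "x \<in> D \<Longrightarrow> \<i> *\<^sub>C x \<in> D" by (rule DscaleC)

lemma hadd: "x \<in> D \<Longrightarrow> y \<in> D \<Longrightarrow> h (x + y) = h x + h y"
  using sa by (simp add: self_adjoint_op_def clinear_on_def)
lemma hscaleC: "x \<in> D \<Longrightarrow> h (a *\<^sub>C x) = a *\<^sub>C h x"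
  using sa by (simp add: self_adjoint_op_def clinear_on_def)
lemma hscaleR: "x \<in> D \<Longrightarrow> h (r *\<^sub>R x) = r *\<^sub>R h x"
  using hscaleC[of x "complex_of_real r"] by simp
lemma hminus: "x \<in> D \<Longrightarrow> h (- x) = - h x"
  using hscaleR[of x "-1"] by simp
lemma hdiff: "x \<in> D \<Longrightarrow> y \<in> D \<Longrightarrow> h (x - y) = h x - h y"
  using hadd[of x "-y"] hminus[of y] Dminus[of y] by simp
lemma h0: "h 0 = 0" using hscaleR[of 0 0] by simp

lemma hsym: "x \<in> D \<Longrightarrow> y \<in> D \<Longrightarrow> inner (h x) y = inner x (h y)"
proof -
  assume "x \<in> D" "y \<in> D"
  then have "cinner (h x) y = cinner x (h y)" using sa by (simp add: self_adjoint_op_def)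
  then have "Re (cinner (h x) y) = Re (cinner x (h y))" by simp
  then show ?thesis by simp
qed

lemma adj_real:
  assumes "\<forall>x\<in>D. inner (h x) y = inner x z"
  shows "y \<in> D \<and> h y = z"
proof -
  have "\<forall>x\<in>D. cinner (h x) y = cinner x z"
  proof
    fix x assume x: "x \<in> D"
    have "inner (h x) (\<i> *\<^sub>C y) = - inner (\<i> *\<^sub>C h x) y"
      by (simp add: inner_ii_left)
    also have "\<dots> = - inner (h (\<i> *\<^sub>C x)) y" by (simp add: hscaleC x)
    also have "\<dots> = - inner (\<i> *\<^sub>C x) z" using assms Dii[OF x] by simp
    also have "\<dots> = inner x (\<i> *\<^sub>C z)" by (simp add: inner_ii_left)
    finally have eq: "inner (h x) (\<i> *\<^sub>C y) = inner x (\<i> *\<^sub>C z)" .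
    show "cinner (h x) y = cinner x z"
      using assms x eq by (simp add: complex_eq_iff)
  qed
  then have "y \<in> adjoint_dom D h" by (auto simp: adjoint_dom_def)
  then have yD: "y \<in> D" using sa by (simp add: self_adjoint_op_def)
  have "inner x (h y - z) = 0" for x
  proof (rule dense_closed_prop[OF dense, where P="\<lambda>x. inner x (h y - z) = 0"])
    show "closed {x. inner x (h y - z) = 0}"
      by (intro closed_Collect_eq continuous_intros)
    show "\<forall>x\<in>D. inner x (h y - z) = 0"
      using assms yD by (auto simp: inner_diff_right hsym[symmetric])
  qed
  from this[of "h y - z"] have "h y = z" by simp
  with yD show ?thesis by simp
qed

definition A :: "'a \<Rightarrow> 'a" where "A x = \<i> *\<^sub>C h x"

lemma A_add: "x \<in> D \<Longrightarrow> y \<in> D \<Longrightarrow> A (x + y) = A x + A y"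
  by (simp add: A_def hadd scaleC_add_right)
lemma A_diff: "x \<in> D \<Longrightarrow> y \<in> D \<Longrightarrow> A (x - y) = A x - A y"
  by (simp add: A_def hdiff scaleC_diff_right)
lemma A_scaleR: "x \<in> D \<Longrightarrow> A (r *\<^sub>R x) = r *\<^sub>R A x"
  by (simp add: A_def hscaleR scaleC_scaleR_right)
lemma A_ii: "x \<in> D \<Longrightarrow> A (\<i> *\<^sub>C x) = \<i> *\<^sub>C A x"
  by (simp add: A_def hscaleC)
lemma A0: "A 0 = 0" by (simp add: A_def h0)

lemma A_skew2: "x \<in> D \<Longrightarrow> y \<in> D \<Longrightarrow> inner (A x) y = - inner x (A y)"
proof -
  assume x: "x \<in> D" and y: "y \<in> D"
  have "inner (A x) y = - inner (h x) (\<i> *\<^sub>C y)" by (simp add: A_def inner_ii_left)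
  also have "\<dots> = - inner x (h (\<i> *\<^sub>C y))" using hsym[OF x Dii[OF y]] by simp
  also have "\<dots> = - inner x (A y)" by (simp add: A_def hscaleC y)
  finally show ?thesis .
qed

lemma A_skew: "x \<in> D \<Longrightarrow> inner (A x) x = 0"
  using A_skew2[of x x] by (simp add: inner_commute)

lemma A_closed:
  assumes xD: "\<And>n. xs n \<in> D" and xl: "xs \<longlonglongrightarrow> x" and yl: "(\<lambda>n. A (xs n)) \<longlonglongrightarrow> y"
  shows "x \<in> D \<and> A x = y"
proof -
  have hl: "(\<lambda>n. h (xs n)) \<longlonglongrightarrow> - (\<i> *\<^sub>C y)"
  proof -
    have "(\<lambda>n. - (\<i> *\<^sub>C A (xs n))) \<longlonglongrightarrow> - (\<i> *\<^sub>C y)"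
      by (intro tendsto_minus bounded_linear.tendsto[OF bounded_linear_ii] yl)
    then show ?thesis by (simp add: A_def)
  qed
  have "\<forall>z\<in>D. inner (h z) x = inner z (- (\<i> *\<^sub>C y))"
  proof
    fix z assume z: "z \<in> D"
    have "(\<lambda>n. inner (h z) (xs n)) \<longlonglongrightarrow> inner (h z) x" by (intro tendsto_intros xl)
    moreover have "(\<lambda>n. inner (h z) (xs n)) = (\<lambda>n. inner z (h (xs n)))" using hsym[OF z xD] by auto
    moreover have "(\<lambda>n. inner z (h (xs n))) \<longlonglongrightarrow> inner z (- (\<i> *\<^sub>C y))" by (intro tendsto_intros hl)
    ultimately show "inner (h z) x = inner z (- (\<i> *\<^sub>C y))" using LIMSEQ_unique by metis
  qed
  from adj_real[OF this] have "x \<in> D" "h x = - (\<i> *\<^sub>C y)" by auto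
  then show ?thesis by (simp add: A_def scaleC_minus_right)
qed

lemma norm_res_sq: "x \<in> D \<Longrightarrow> norm (l *\<^sub>R x - A x)^2 = l^2 * norm x ^2 + norm (A x)^2"
  unfolding power2_norm_eq_inner
  by (simp add: inner_diff_left inner_diff_right A_skew inner_commute[of x "A x"] power2_eq_square algebra_simps)

lemma norm_res_ge: "x \<in> D \<Longrightarrow> \<bar>l\<bar> * norm x \<le> norm (l *\<^sub>R x - A x)"
proof -
  assume "x \<in> D"
  then have "(\<bar>l\<bar> * norm x)^2 \<le> norm (l *\<^sub>R x - A x)^2"
    using norm_res_sq[of x l] by (simp add: power_mult_distrib)
  then show ?thesis by (rule power2_le_imp_le) simp
qed

lemma res_surj:
  assumes "l \<noteq> 0"
  shows "\<exists>x\<in>D. l *\<^sub>R x - A x = y"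
proof -
  define M where "M = (\<lambda>x. l *\<^sub>R x - A x) ` D"
  have lin: "l *\<^sub>R (a - b) - A (a - b) = (l *\<^sub>R a - A a) - (l *\<^sub>R b - A b)" if "a \<in> D" "b \<in> D" for a b
    using that by (simp add: A_diff algebra_simps)
  have clM: "closed M"
    unfolding closed_sequential_limits
  proof (intro allI impI, elim conjE)
    fix zs z assume zM: "\<forall>n. zs n \<in> M" and zl: "zs \<longlonglongrightarrow> z"
    have "\<forall>n. \<exists>x. x \<in> D \<and> zs n = l *\<^sub>R x - A x" using zM unfolding M_def by blast
    then obtain xs where xs: "\<forall>n. xs n \<in> D \<and> zs n = l *\<^sub>R xs n - A (xs n)" by metis
    then have xD: "\<And>n. xs n \<in> D" and zx: "\<And>n. zs n = l *\<^sub>R xs n - A (xs n)" by auto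
    have "Cauchy zs" using zl by (rule LIMSEQ_imp_Cauchy)
    have "Cauchy xs"
    proof (rule metric_CauchyI)
      fix e :: real assume "e > 0"
      then have "e * \<bar>l\<bar> > 0" using assms by simp
      then obtain N where N: "\<forall>m\<ge>N. \<forall>n\<ge>N. dist (zs m) (zs n) < e * \<bar>l\<bar>"
        using \<open>Cauchy zs\<close> unfolding Cauchy_def by blast
      show "\<exists>N. \<forall>m\<ge>N. \<forall>n\<ge>N. dist (xs m) (xs n) < e"
      proof (intro exI allI impI)
        fix m n assume "m \<ge> N" "n \<ge> N"
        have "\<bar>l\<bar> * norm (xs m - xs n) \<le> norm (zs m - zs n)"
          using norm_res_ge[OF Ddiff[OF xD[of m] xD[of n]], of l] lin[OF xD[of m] xD[of n]] zx by simp
        also have "\<dots> < e * \<bar>l\<bar>" using N \<open>m \<ge> N\<close> \<open>n \<ge> N\<close> by (simp add: dist_norm)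
        finally show "dist (xs m) (xs n) < e" using assms by (simp add: dist_norm mult.commute)
      qed
    qed
    then obtain x where xl: "xs \<longlonglongrightarrow> x" using Cauchy_convergent_iff convergent_def by blast
    have "(\<lambda>n. A (xs n)) \<longlonglongrightarrow> l *\<^sub>R x - z"
    proof -
      have "(\<lambda>n. l *\<^sub>R xs n - zs n) \<longlonglongrightarrow> l *\<^sub>R x - z" by (intro tendsto_intros xl zl)
      then show ?thesis by (simp add: zx)
    qed
    from A_closed[OF xD xl this] have "x \<in> D" "A x = l *\<^sub>R x - z" by auto
    then show "z \<in> M" unfolding M_def by (auto intro!: image_eqI[where x=x])
  qed
  have "0 \<in> M" unfolding M_def using A0 by (auto intro!: image_eqI[where x=0])
  moreover have "\<forall>a\<in>M. \<forall>b\<in>M. a + b \<in> M"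
  proof (intro ballI)
    fix a b assume "a \<in> M" "b \<in> M"
    then obtain u v where u: "u \<in> D" "a = l *\<^sub>R u - A u" and v: "v \<in> D" "b = l *\<^sub>R v - A v"
      unfolding M_def by blast
    have "a + b = l *\<^sub>R (u + v) - A (u + v)" using u v by (simp add: A_add scaleR_add_right)
    then show "a + b \<in> M" unfolding M_def using Dadd[OF u(1) v(1)] by blast
  qed
  moreover have "\<forall>r. \<forall>a\<in>M. r *\<^sub>R a \<in> M"
  proof (intro allI ballI)
    fix r a assume "a \<in> M"
    then obtain u where u: "u \<in> D" "a = l *\<^sub>R u - A u"
      unfolding M_def by blast
    have "r *\<^sub>R a = l *\<^sub>R (r *\<^sub>R u) - A (r *\<^sub>R u)" using u by (simp add: A_scaleR scaleR_diff_right)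
    then show "r *\<^sub>R a \<in> M" unfolding M_def using DscaleR[OF u(1)] by blast
  qed
  ultimately obtain p where pM: "p \<in> M" and po: "\<forall>m\<in>M. inner (y - p) m = 0"
    using proj_exists[OF clM] by blast
  define v where "v = y - p"
  have "\<forall>x\<in>D. inner (h x) (\<i> *\<^sub>C v) = inner x ((- l) *\<^sub>R v)"
  proof
    fix x assume x: "x \<in> D"
    have "inner (l *\<^sub>R x - A x) v = 0" using po x unfolding M_def v_def by (auto simp: inner_commute)
    then have "l * inner x v - inner (A x) v = 0" by (simp add: inner_diff_left)
    moreover have "inner (A x) v = - inner (h x) (\<i> *\<^sub>C v)" by (simp add: A_def inner_ii_left)
    ultimately show "inner (h x) (\<i> *\<^sub>C v) = inner x ((- l) *\<^sub>R v)" by simp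
  qed
  from adj_real[OF this] have uD: "\<i> *\<^sub>C v \<in> D" and hu: "h (\<i> *\<^sub>C v) = (- l) *\<^sub>R v" by auto
  have "A (\<i> *\<^sub>C v) = (- l) *\<^sub>R (\<i> *\<^sub>C v)" by (simp add: A_def hu scaleC_scaleR_right scaleC_minus_right)
  with A_skew[OF uD] have "l * inner (\<i> *\<^sub>C v) (\<i> *\<^sub>C v) = 0" by simp
  then have "v = 0" using assms by (simp add: inner_scaleC_ii)
  then have "y \<in> M" using pM by (simp add: v_def)
  then show ?thesis unfolding M_def by auto
qed

end

context sa
begin

definition R :: "real \<Rightarrow> 'a \<Rightarrow> 'a" where
  "R l y = (SOME x. x \<in> D \<and> l *\<^sub>R x - A x = y)"

lemma R_spec:
  assumes "l \<noteq> 0" shows "R l y \<in> D \<and> l *\<^sub>R R l y - A (R l y) = y"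
proof -
  have "\<exists>x. x \<in> D \<and> l *\<^sub>R x - A x = y" using res_surj[OF assms] by blast
  then show ?thesis unfolding R_def by (rule someI_ex)
qed

lemma R_D: "l \<noteq> 0 \<Longrightarrow> R l y \<in> D" using R_spec by blast
lemma R_eq: "l \<noteq> 0 \<Longrightarrow> l *\<^sub>R R l y - A (R l y) = y" using R_spec by blast

lemma res_inj:
  assumes "l \<noteq> 0" "x \<in> D" "x' \<in> D" "l *\<^sub>R x - A x = l *\<^sub>R x' - A x'"
  shows "x = x'"
proof -
  have "l *\<^sub>R (x - x') - A (x - x') = 0" using assms by (simp add: A_diff algebra_simps)
  then have "\<bar>l\<bar> * norm (x - x') \<le> 0" using norm_res_ge[OF Ddiff[OF assms(2,3)], of l] by simp
  then show ?thesis using assms(1) by (simp add: mult_le_0_iff)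
qed

lemma R_unique: "l \<noteq> 0 \<Longrightarrow> x \<in> D \<Longrightarrow> l *\<^sub>R x - A x = y \<Longrightarrow> R l y = x"
  using res_inj[of l "R l y" x] R_spec[of l y] by auto

lemma A_R: "l \<noteq> 0 \<Longrightarrow> A (R l y) = l *\<^sub>R R l y - y"
  using R_eq[of l y] by (simp add: algebra_simps)

lemma R_add: "l \<noteq> 0 \<Longrightarrow> R l (x + y) = R l x + R l y"
  by (rule R_unique) (auto simp: R_D Dadd A_add R_eq scaleR_add_right algebra_simps A_R)

lemma R_scaleR: "l \<noteq> 0 \<Longrightarrow> R l (r *\<^sub>R x) = r *\<^sub>R R l x"
  by (rule R_unique) (auto simp: R_D DscaleR A_scaleR A_R algebra_simps)

lemma R_diff: "l \<noteq> 0 \<Longrightarrow> R l (x - y) = R l x - R l y"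
  by (rule R_unique) (auto simp: R_D Ddiff A_diff A_R algebra_simps)

lemma R_minus: "l \<noteq> 0 \<Longrightarrow> R l (- x) = - R l x"
  using R_diff[of l 0 x] R_scaleR[of l 0 x] by simp

lemma R_ii: "l \<noteq> 0 \<Longrightarrow> R l (\<i> *\<^sub>C x) = \<i> *\<^sub>C R l x"
  by (rule R_unique) (auto simp: R_D Dii A_ii A_R scaleC_scaleR_right scaleC_diff_right)

lemma R_norm: "l \<noteq> 0 \<Longrightarrow> \<bar>l\<bar> * norm (R l y) \<le> norm y"
  using norm_res_ge[OF R_D, of l l y] R_eq[of l y] by simp

lemma R_norm2: "l \<noteq> 0 \<Longrightarrow> norm (R l y) \<le> norm y / \<bar>l\<bar>"
  using R_norm[of l y] by (simp add: field_simps)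

lemma R_bl: "l \<noteq> 0 \<Longrightarrow> bounded_linear (R l)"
  by (rule bounded_linear_intro[where K="1 / \<bar>l\<bar>"]) (auto simp: R_add R_scaleR intro: order.trans[OF R_norm2] )

lemma R_A: "l \<noteq> 0 \<Longrightarrow> x \<in> D \<Longrightarrow> R l (A x) = A (R l x)"
proof (rule R_unique)
  assume l: "l \<noteq> 0" and x: "x \<in> D"
  have "A (R l x) = l *\<^sub>R R l x - x" by (rule A_R[OF l])
  then show "A (R l x) \<in> D" using x R_D[OF l] by (simp add: Ddiff DscaleR)
  have "A (A (R l x)) = l *\<^sub>R A (R l x) - A x"
    using A_R[OF l, of x] x R_D[OF l] by (simp add: A_diff A_scaleR DscaleR)
  then show "l *\<^sub>R A (R l x) - A (A (R l x)) = A x" by simp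
qed

lemma R_lam: "l \<noteq> 0 \<Longrightarrow> x \<in> D \<Longrightarrow> l *\<^sub>R R l x - x = R l (A x)"
proof -
  assume l: "l \<noteq> 0" and x: "x \<in> D"
  have "R l (l *\<^sub>R x - A x) = x" using l x by (intro R_unique) auto
  then show ?thesis using l by (simp add: R_diff R_scaleR algebra_simps)
qed

lemma R_comm:
  assumes a: "a \<noteq> 0" and b: "b \<noteq> 0"
  shows "R a (R b y) = R b (R a y)"
proof -
  define u where "u = R a (R b y)"
  have uD: "u \<in> D" using R_D[OF a] by (simp add: u_def)
  have Au: "A u = a *\<^sub>R u - R b y" using A_R[OF a] by (simp add: u_def)
  have AuD: "A u \<in> D" using Au uD R_D[OF b] by (simp add: Ddiff DscaleR)
  define v where "v = b *\<^sub>R u - A u"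
  have vD: "v \<in> D" using uD AuD by (simp add: v_def Ddiff DscaleR)
  have AAu: "A (A u) = a *\<^sub>R A u - A (R b y)"
  proof -
    have "A (A u) = A (a *\<^sub>R u - R b y)" using Au by simp
    also have "\<dots> = a *\<^sub>R A u - A (R b y)" using uD R_D[OF b] by (simp add: A_diff A_scaleR DscaleR)
    finally show ?thesis .
  qed
  have ARb: "A (R b y) = b *\<^sub>R R b y - y" by (rule A_R[OF b])
  have Av: "A v = b *\<^sub>R A u - A (A u)" using uD AuD by (simp add: v_def A_diff[OF DscaleR[OF uD] AuD] A_scaleR)
  have "a *\<^sub>R v - A v = y"
    unfolding Av AAu ARb by (simp add: v_def Au algebra_simps)
  then have "R a y = v" using a vD by (intro R_unique) auto
  then have "R b (R a y) = u" using b uD by (simp add: R_unique v_def)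
  then show ?thesis by (simp add: u_def)
qed

definition Rop :: "real \<Rightarrow> 'a bop" where "Rop l = mkop (Blinfun (R l))"

lemma ap_Rop[simp]: "l \<noteq> 0 \<Longrightarrow> ap (Rop l) y = R l y"
  by (simp add: Rop_def bounded_linear_Blinfun_apply R_bl)

lemma Rop_comm: "a \<noteq> 0 \<Longrightarrow> b \<noteq> 0 \<Longrightarrow> Rop a * Rop b = Rop b * Rop a"
  unfolding Rop_def mkop_mult[symmetric]
  by (rule arg_cong[where f=mkop], rule blinfun_eqI) (simp add: bounded_linear_Blinfun_apply R_bl R_comm)

lemma lamR_conv:
  assumes s: "s \<noteq> 0"
  shows "(\<lambda>n. (s * real (Suc n)) *\<^sub>R R (s * real (Suc n)) y) \<longlonglongrightarrow> y"
proof (rule strong_conv_dense[OF dense, where T="\<lambda>n z. (s * real (Suc n)) *\<^sub>R R (s * real (Suc n)) z"])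
  fix n z
  have c: "s * real (Suc n) \<noteq> 0" using s by simp
  show "norm ((s * real (Suc n)) *\<^sub>R R (s * real (Suc n)) z) \<le> norm z"
    using R_norm[OF c] by simp
  fix x y'
  show "(s * real (Suc n)) *\<^sub>R R (s * real (Suc n)) (x - y') =
     (s * real (Suc n)) *\<^sub>R R (s * real (Suc n)) x - (s * real (Suc n)) *\<^sub>R R (s * real (Suc n)) y'"
    using c by (simp add: R_diff scaleR_diff_right)
next
  fix d assume d: "d \<in> D"
  show "(\<lambda>n. (s * real (Suc n)) *\<^sub>R R (s * real (Suc n)) d) \<longlonglongrightarrow> d"
  proof (rule LIM_zero_cancel, rule Lim_null_comparison)
    show "\<forall>\<^sub>F n in sequentially. norm ((s * real (Suc n)) *\<^sub>R R (s * real (Suc n)) d - d)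
        \<le> (norm (A d) / \<bar>s\<bar>) * inverse (real (Suc n))"
    proof (intro always_eventually allI)
      fix n
      have c: "s * real (Suc n) \<noteq> 0" using s by simp
      have "norm ((s * real (Suc n)) *\<^sub>R R (s * real (Suc n)) d - d) = norm (R (s * real (Suc n)) (A d))"
        using R_lam[OF c d] by simp
      also have "\<dots> \<le> norm (A d) / \<bar>s * real (Suc n)\<bar>" by (rule R_norm2[OF c])
      also have "\<bar>s * real (Suc n)\<bar> = \<bar>s\<bar> * real (Suc n)" by (simp add: abs_mult)
      also have "norm (A d) / (\<bar>s\<bar> * real (Suc n)) = (norm (A d) / \<bar>s\<bar>) * inverse (real (Suc n))"
        by (simp add: divide_inverse)
      finally show "norm ((s * real (Suc n)) *\<^sub>R R (s * real (Suc n)) d - d)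
        \<le> (norm (A d) / \<bar>s\<bar>) * inverse (real (Suc n))" .
    qed
    show "(\<lambda>n. (norm (A d) / \<bar>s\<bar>) * inverse (real (Suc n))) \<longlonglongrightarrow> 0"
      by (rule tendsto_mult_right_zero[OF LIMSEQ_inverse_real_of_nat])
  qed
qed

end

context sa
begin

definition cc :: "nat \<Rightarrow> real" where "cc n = real (Suc n)"

lemma cc_pos: "cc n > 0" by (simp add: cc_def)
lemma cc_nz[simp]: "cc n \<noteq> 0" "- cc n \<noteq> 0" by (simp_all add: cc_def)

definition Bop :: "nat \<Rightarrow> 'a bop" where
  "Bop n = (- (cc n * cc n)) *\<^sub>R ((cc n) *\<^sub>R (Rop (cc n) * Rop (- cc n)) - Rop (- cc n))"

lemma ap_Bop: "ap (Bop n) y = (- (cc n * cc n)) *\<^sub>R A (R (cc n) (R (- cc n) y))"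
  by (simp add: Bop_def A_R)

lemma Bop_skew: "inner (ap (Bop n) y) y = 0"
proof -
  define c where "c = cc n"
  have c: "c \<noteq> 0" "- c \<noteq> 0" by (simp_all add: c_def)
  define z where "z = R (- c) y"
  define w where "w = R c z"
  have zD: "z \<in> D" using R_D[OF c(2)] by (simp add: z_def)
  have wD: "w \<in> D" using R_D[OF c(1)] by (simp add: w_def)
  have Aw: "A w = c *\<^sub>R w - z" using A_R[OF c(1)] by (simp add: w_def)
  have AwD: "A w \<in> D" using Aw wD zD by (simp add: Ddiff DscaleR)
  have Az: "A z = (- c) *\<^sub>R z - y" using A_R[OF c(2)] by (simp add: z_def)
  have "A (A w) = c *\<^sub>R A w - A z"
  proof -
    have "A (A w) = A (c *\<^sub>R w - z)" using Aw by simp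
    also have "\<dots> = c *\<^sub>R A w - A z" using wD zD by (simp add: A_diff A_scaleR DscaleR)
    finally show ?thesis .
  qed
  then have "A (A w) = c *\<^sub>R A w - ((- c) *\<^sub>R z - y)" using Az by simp
  then have "A (A w) = c *\<^sub>R A w + c *\<^sub>R z + y" by (simp add: algebra_simps)
  moreover have "z = c *\<^sub>R w - A w" using Aw by simp
  ultimately have "A (A w) = c *\<^sub>R A w + c *\<^sub>R (c *\<^sub>R w - A w) + y" by simp
  then have y: "y = A (A w) - c^2 *\<^sub>R w" by (simp add: algebra_simps power2_eq_square)
  have 1: "inner (A w) (A (A w)) = 0" using A_skew[OF AwD] by (simp add: inner_commute)
  have 2: "inner (A w) w = 0" using A_skew[OF wD] .
  have "inner (A w) y = 0" by (subst y) (simp add: inner_diff_right 1 2)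
  then show ?thesis by (simp add: ap_Bop w_def z_def c_def)
qed

lemma Bop_conv:
  assumes x: "x \<in> D"
  shows "(\<lambda>n. ap (Bop n) x) \<longlonglongrightarrow> A x"
proof -
  define P where "P n v = cc n *\<^sub>R R (cc n) v" for n v
  define Q where "Q n v = (- cc n) *\<^sub>R R (- cc n) v" for n v
  have P: "(\<lambda>n. P n v) \<longlonglongrightarrow> v" for v
    using lamR_conv[of 1 v] by (simp add: P_def cc_def)
  have Q: "(\<lambda>n. Q n v) \<longlonglongrightarrow> v" for v
    using lamR_conv[of "-1" v] by (simp add: Q_def cc_def)
  have eq: "ap (Bop n) x = P n (Q n (A x))" for n
  proof -
    have "A (R (cc n) (R (- cc n) x)) = R (cc n) (R (- cc n) (A x))"
      using R_A[OF cc_nz(1) R_D[OF cc_nz(2)]] R_A[OF cc_nz(2) x] by simp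
    then show ?thesis
      by (simp add: ap_Bop P_def Q_def R_scaleR[OF cc_nz(1)] R_scaleR[OF cc_nz(2)] R_minus[OF cc_nz(1)])
  qed
  have "(\<lambda>n. P n (Q n (A x)) - A x) \<longlonglongrightarrow> 0"
  proof (rule Lim_null_comparison)
    show "\<forall>\<^sub>F n in sequentially. norm (P n (Q n (A x)) - A x) \<le> norm (Q n (A x) - A x) + norm (P n (A x) - A x)"
    proof (intro always_eventually allI)
      fix n
      have "P n (Q n (A x)) - A x = P n (Q n (A x) - A x) + (P n (A x) - A x)"
        by (simp add: P_def R_diff scaleR_diff_right)
      moreover have "norm (P n (Q n (A x) - A x)) \<le> norm (Q n (A x) - A x)"
        using R_norm[OF cc_nz(1), of n "Q n (A x) - A x"] cc_pos[of n] by (simp add: P_def)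
      ultimately show "norm (P n (Q n (A x)) - A x) \<le> norm (Q n (A x) - A x) + norm (P n (A x) - A x)"
        by (metis add_right_mono norm_triangle_ineq order_trans)
    qed
    have "(\<lambda>n. norm (Q n (A x) - A x) + norm (P n (A x) - A x)) \<longlonglongrightarrow> 0 + 0"
      by (intro tendsto_add tendsto_norm_zero LIM_zero P Q)
    then show "(\<lambda>n. norm (Q n (A x) - A x) + norm (P n (A x) - A x)) \<longlonglongrightarrow> 0" by simp
  qed
  then show ?thesis unfolding eq[symmetric] by (rule LIM_zero_cancel)
qed

lemma comm_lemma:
  fixes Z P Q :: "'b::real_normed_algebra"
  assumes "Z * P = P * Z" "Z * Q = Q * Z"
  shows "Z * (a *\<^sub>R (b *\<^sub>R (P * Q) - Q)) = (a *\<^sub>R (b *\<^sub>R (P * Q) - Q)) * Z"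
proof -
  have "Z * (P * Q) = (P * Q) * Z" by (metis assms mult.assoc)
  then show ?thesis by (simp add: algebra_simps assms(2))
qed

lemma Rop_Bop: "l \<noteq> 0 \<Longrightarrow> Rop l * Bop m = Bop m * Rop l"
  unfolding Bop_def by (rule comm_lemma) (simp_all add: Rop_comm)

lemma Bop_comm: "Bop n * Bop m = Bop m * Bop n"
proof -
  have "Bop m * Bop n = Bop n * Bop m"
    unfolding Bop_def[of n] by (rule comm_lemma) (simp_all add: Rop_Bop)
  then show ?thesis by simp
qed

definition Jop :: "'a bop" where "Jop = mkop (Blinfun (\<lambda>x. \<i> *\<^sub>C x))"

lemma ap_Jop[simp]: "ap Jop x = \<i> *\<^sub>C x"
  by (simp add: Jop_def bounded_linear_Blinfun_apply bounded_linear_ii)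

lemma Rop_J: "l \<noteq> 0 \<Longrightarrow> Rop l * Jop = Jop * Rop l"
  unfolding Rop_def Jop_def mkop_mult[symmetric]
  by (rule arg_cong[where f=mkop], rule blinfun_eqI)
    (simp add: bounded_linear_Blinfun_apply R_bl bounded_linear_ii R_ii)

lemma Bop_J: "Bop n * Jop = Jop * Bop n"
proof -
  have "Jop * Bop n = Bop n * Jop"
    unfolding Bop_def by (rule comm_lemma) (simp_all add: Rop_J)
  then show ?thesis by simp
qed

definition E :: "nat \<Rightarrow> real \<Rightarrow> 'a bop" where "E n t = exp (t *\<^sub>R Bop n)"

lemma E_deriv_right: "((E n) has_vector_derivative (E n t * Bop n)) (at t)"
  unfolding E_def[abs_def] by (rule exp_scaleR_has_vector_derivative_right)

lemma E_deriv_left: "((E n) has_vector_derivative (Bop n * E n t)) (at t)"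
  unfolding E_def[abs_def] by (rule exp_scaleR_has_vector_derivative_left)

lemma apE_deriv: "((\<lambda>t. ap (E n t) x) has_vector_derivative ap (E n t) (ap (Bop n) x)) (at t)"
  using ap_vector_derivative[OF E_deriv_right[of n t], of x] by simp

lemma apE_deriv2: "((\<lambda>t. ap (E n t) x) has_vector_derivative ap (Bop n) (ap (E n t) x)) (at t)"
  using ap_vector_derivative[OF E_deriv_left[of n t], of x] by simp

lemma E_iso: "norm (ap (E n t) x) = norm x"
proof -
  have "norm (ap (E n t) x) = norm (ap (E n 0) x)"
    by (rule const_norm[OF apE_deriv2]) (rule Bop_skew)
  then show ?thesis by (simp add: E_def)
qed

lemma E_0[simp]: "E n 0 = 1" by (simp add: E_def)

lemma E_add: "E n (s + t) = E n s * E n t"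
  unfolding E_def by (simp add: scaleR_add_left exp_add_commuting)

lemma E_comm_B: "E n t * Bop m = Bop m * E n t"
  unfolding E_def by (rule exp_commute) (simp add: Bop_comm)

lemma E_J: "E n t * Jop = Jop * E n t"
  unfolding E_def by (rule exp_commute) (simp add: Bop_J)

lemma apE_ii: "ap (E n t) (\<i> *\<^sub>C x) = \<i> *\<^sub>C ap (E n t) x"
  using arg_cong[OF E_J[of n t], of "\<lambda>X. ap X x"] by simp

lemma est1: "norm (ap (E n t) x - ap (E m t) x) \<le> norm (ap (Bop n) x - ap (Bop m) x) * \<bar>t - 0\<bar>"
proof -
  define \<phi> where "\<phi> s = ap (E n s * E m (t - s)) x" for s
  define \<phi>' where "\<phi>' s = ap (E n s * E m (t - s)) (ap (Bop n) x - ap (Bop m) x)" for s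
  have d: "(\<phi> has_vector_derivative \<phi>' s) (at s)" for s
  proof -
    have m: "((\<lambda>s. E m (t - s)) has_vector_derivative (- (E m (t - s) * Bop m))) (at s)"
    proof -
      have "((E m \<circ> (\<lambda>s. t - s)) has_vector_derivative (-1) *\<^sub>R (E m (t - s) * Bop m)) (at s)"
        by (rule vector_diff_chain_at) (auto intro!: derivative_eq_intros E_deriv_right)
      then show ?thesis by (simp add: o_def)
    qed
    have "((\<lambda>s. E n s * E m (t - s)) has_vector_derivative
        (E n s * (- (E m (t - s) * Bop m)) + (E n s * Bop n) * E m (t - s))) (at s)"
      by (rule has_vector_derivative_mult[OF E_deriv_right m])
    from ap_vector_derivative[OF this, of x]
    have "(\<phi> has_vector_derivative ap (E n s * (- (E m (t - s) * Bop m)) + (E n s * Bop n) * E m (t - s)) x) (at s)"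
      by (simp add: \<phi>_def[abs_def])
    moreover have "ap (E n s * (- (E m (t - s) * Bop m)) + (E n s * Bop n) * E m (t - s)) x = \<phi>' s"
    proof -
      have "(E n s * Bop n) * E m (t - s) = E n s * E m (t - s) * Bop n"
        by (simp add: mult.assoc E_comm_B[of m "t - s" n])
      then show ?thesis by (simp add: \<phi>'_def ap_diff_right mult.assoc)
    qed
    ultimately show ?thesis by simp
  qed
  have b: "norm (\<phi>' s) \<le> norm (ap (Bop n) x - ap (Bop m) x)" for s
    by (simp add: \<phi>'_def E_iso)
  have "norm (\<phi> t - \<phi> 0) \<le> norm (ap (Bop n) x - ap (Bop m) x) * \<bar>t - 0\<bar>"
    by (rule mvt_vec[OF d b])
  then show ?thesis by (simp add: \<phi>_def)
qed

lemma est2: "norm (ap (E n t) x - ap (E n s) x) \<le> norm (ap (Bop n) x) * \<bar>t - s\<bar>"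
  by (rule mvt_vec[OF apE_deriv]) (simp add: E_iso)

end

lemma norm_triangle3: "norm (a + b + c) \<le> norm a + norm b + (norm c::real)"
  for a b c :: "'b::real_normed_vector"
  by (metis add_right_mono norm_triangle_ineq order_trans)

lemma norm_triangle4: "norm (a + b + c + d) \<le> norm a + norm b + norm c + (norm d::real)"
  for a b c d :: "'b::real_normed_vector"
  by (metis add_right_mono norm_triangle_ineq order_trans)

context sa
begin

lemma unif_cauchy:
  assumes e: "e > 0" and T: "T \<ge> 0"
  shows "\<exists>N. \<forall>n\<ge>N. \<forall>m\<ge>N. \<forall>t. \<bar>t\<bar> \<le> T \<longrightarrow> norm (ap (E n t) x - ap (E m t) x) < e"
proof -
  obtain d where dD: "d \<in> D" and xd: "dist x d < e/3"
    using dense_approx[OF dense, of "e/3" x] e by auto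
  have "Cauchy (\<lambda>n. ap (Bop n) d)" using Bop_conv[OF dD] by (rule LIMSEQ_imp_Cauchy)
  moreover have "e / (3 * (T + 1)) > 0" using e T by simp
  ultimately obtain N where N: "\<And>m n. m \<ge> N \<Longrightarrow> n \<ge> N \<Longrightarrow> norm (ap (Bop m) d - ap (Bop n) d) < e / (3 * (T + 1))"
    unfolding Cauchy_def dist_norm by blast
  show ?thesis
  proof (intro exI allI impI)
    fix n m t assume n: "n \<ge> N" and m: "m \<ge> N" and t: "\<bar>t\<bar> \<le> T"
    have eq: "ap (E n t) x - ap (E m t) x = ap (E n t) (x - d) + (ap (E n t) d - ap (E m t) d) + ap (E m t) (d - x)"
      by (simp add: ap_diff_right)
    have "norm (ap (E n t) d - ap (E m t) d) \<le> norm (ap (Bop n) d - ap (Bop m) d) * \<bar>t - 0\<bar>"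
      by (rule est1)
    also have "\<dots> \<le> e / (3 * (T + 1)) * T"
      using N[OF n m] t e T by (intro mult_mono) auto
    also have "\<dots> \<le> e / 3"
    proof -
      have "e * T \<le> e * (T + 1)" using e by simp
      then show ?thesis using T by (simp add: field_simps)
    qed
    finally have 2: "norm (ap (E n t) d - ap (E m t) d) \<le> e / 3" .
    have 1: "norm (ap (E n t) (x - d)) < e / 3" using xd by (simp add: E_iso dist_norm)
    have 3: "norm (ap (E m t) (d - x)) < e / 3" using xd by (simp add: E_iso dist_norm norm_minus_commute)
    have "norm (ap (E n t) x - ap (E m t) x) \<le> norm (ap (E n t) (x - d)) + norm (ap (E n t) d - ap (E m t) d) + norm (ap (E m t) (d - x))"
      unfolding eq by (rule norm_triangle3)
    also have "\<dots> < e" using 1 2 3 by linarith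
    finally show "norm (ap (E n t) x - ap (E m t) x) < e" .
  qed
qed

definition U :: "real \<Rightarrow> 'a \<Rightarrow> 'a" where "U t x = lim (\<lambda>n. ap (E n t) x)"

lemma U_conv: "(\<lambda>n. ap (E n t) x) \<longlonglongrightarrow> U t x"
proof -
  have "Cauchy (\<lambda>n. ap (E n t) x)"
  proof (rule metric_CauchyI)
    fix e :: real assume "e > 0"
    from unif_cauchy[OF this, of "\<bar>t\<bar>" x] obtain N where
      "\<forall>n\<ge>N. \<forall>m\<ge>N. norm (ap (E n t) x - ap (E m t) x) < e" by auto
    then show "\<exists>M. \<forall>m\<ge>M. \<forall>n\<ge>M. dist (ap (E m t) x) (ap (E n t) x) < e"
      by (auto simp: dist_norm)
  qed
  then show ?thesis unfolding U_def by (simp add: Cauchy_convergent_iff convergent_LIMSEQ_iff)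
qed

lemma U_unif:
  assumes e: "e > 0" and T: "T \<ge> 0"
  shows "\<exists>N. \<forall>n\<ge>N. \<forall>t. \<bar>t\<bar> \<le> T \<longrightarrow> norm (ap (E n t) x - U t x) \<le> e"
proof -
  from unif_cauchy[OF e T, of x] obtain N where
    N: "\<forall>n\<ge>N. \<forall>m\<ge>N. \<forall>t. \<bar>t\<bar> \<le> T \<longrightarrow> norm (ap (E n t) x - ap (E m t) x) < e" by auto
  show ?thesis
  proof (intro exI allI impI)
    fix n t assume n: "n \<ge> N" and t: "\<bar>t\<bar> \<le> T"
    show "norm (ap (E n t) x - U t x) \<le> e"
    proof (rule tendsto_le[OF _ tendsto_const])
      show "(\<lambda>m. norm (ap (E n t) x - ap (E m t) x)) \<longlonglongrightarrow> norm (ap (E n t) x - U t x)"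
        by (intro tendsto_intros U_conv)
      show "\<forall>\<^sub>F m in sequentially. norm (ap (E n t) x - ap (E m t) x) \<le> e"
        unfolding eventually_sequentially using N n t by (auto intro!: exI[where x=N] less_imp_le)
    qed simp
  qed
qed

lemma U_add_right: "U t (x + y) = U t x + U t y"
  using tendsto_add[OF U_conv[of t x] U_conv[of t y]] U_conv[of t "x + y"]
  by (simp add: ap_add_right LIMSEQ_unique)

lemma U_scaleR_right: "U t (r *\<^sub>R x) = r *\<^sub>R U t x"
  using tendsto_scaleR[OF tendsto_const[of r] U_conv[of t x]] U_conv[of t "r *\<^sub>R x"]
  by (simp add: ap_scaleR_right LIMSEQ_unique)

lemma U_ii: "U t (\<i> *\<^sub>C x) = \<i> *\<^sub>C U t x"
  using bounded_linear.tendsto[OF bounded_linear_ii U_conv[of t x]] U_conv[of t "\<i> *\<^sub>C x"]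
  by (simp add: apE_ii LIMSEQ_unique)

lemma U_diff_right: "U t (x - y) = U t x - U t y"
  using U_add_right[of t "x - y" y] by (simp add: algebra_simps)

lemma U_norm: "norm (U t x) = norm x"
  using tendsto_norm[OF U_conv[of t x]] by (simp add: E_iso LIMSEQ_const_iff)

lemma U_bl: "bounded_linear (U t)"
  by (rule bounded_linear_intro[where K=1]) (simp_all add: U_add_right U_scaleR_right U_norm)

lemma U_0: "U 0 x = x"
  using U_conv[of 0 x] by (simp add: LIMSEQ_const_iff)

lemma U_add: "U (s + t) x = U s (U t x)"
proof -
  have "(\<lambda>n. ap (E n s) (ap (E n t) x) - U s (U t x)) \<longlonglongrightarrow> 0"
  proof (rule Lim_null_comparison)
    show "\<forall>\<^sub>F n in sequentially. norm (ap (E n s) (ap (E n t) x) - U s (U t x))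
        \<le> norm (ap (E n t) x - U t x) + norm (ap (E n s) (U t x) - U s (U t x))"
    proof (intro always_eventually allI)
      fix n
      have eq: "ap (E n s) (ap (E n t) x) - U s (U t x) = ap (E n s) (ap (E n t) x - U t x) + (ap (E n s) (U t x) - U s (U t x))"
        by (simp add: ap_diff_right)
      have "norm (ap (E n s) (ap (E n t) x) - U s (U t x))
        \<le> norm (ap (E n s) (ap (E n t) x - U t x)) + norm (ap (E n s) (U t x) - U s (U t x))"
        unfolding eq by (rule norm_triangle_ineq)
      then show "norm (ap (E n s) (ap (E n t) x) - U s (U t x))
        \<le> norm (ap (E n t) x - U t x) + norm (ap (E n s) (U t x) - U s (U t x))"
        by (simp only: E_iso)
    qed
    have "(\<lambda>n. norm (ap (E n t) x - U t x) + norm (ap (E n s) (U t x) - U s (U t x))) \<longlonglongrightarrow> 0 + 0"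
      by (intro tendsto_add tendsto_norm_zero LIM_zero U_conv)
    then show "(\<lambda>n. norm (ap (E n t) x - U t x) + norm (ap (E n s) (U t x) - U s (U t x))) \<longlonglongrightarrow> 0"
      by simp
  qed
  then have "(\<lambda>n. ap (E n (s + t)) x) \<longlonglongrightarrow> U s (U t x)"
    by (simp add: E_add LIM_zero_cancel)
  then show ?thesis using U_conv LIMSEQ_unique by blast
qed

lemma U_lip_D:
  assumes d: "d \<in> D"
  shows "norm (U t d - U s d) \<le> norm (A d) * \<bar>t - s\<bar>"
proof (rule tendsto_le[OF _ _ tendsto_norm[OF tendsto_diff[OF U_conv U_conv]]])
  show "(\<lambda>n. norm (ap (Bop n) d) * \<bar>t - s\<bar>) \<longlonglongrightarrow> norm (A d) * \<bar>t - s\<bar>"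
    by (intro tendsto_intros Bop_conv d)
  show "\<forall>\<^sub>F n in sequentially. norm (ap (E n t) d - ap (E n s) d) \<le> norm (ap (Bop n) d) * \<bar>t - s\<bar>"
    by (intro always_eventually allI est2)
qed simp

lemma U_cont_at: "isCont (\<lambda>t. U t x) s"
  unfolding continuous_at_eps_delta
proof (intro allI impI)
  fix e :: real assume e: "e > 0"
  obtain d where dD: "d \<in> D" and xd: "dist x d < e/3"
    using dense_approx[OF dense, of "e/3" x] e by auto
  define del where "del = e / (3 * (norm (A d) + 1))"
  have del: "del > 0" using e by (simp add: del_def add_nonneg_pos)
  show "\<exists>d>0. \<forall>x'. dist x' s < d \<longrightarrow> dist (U x' x) (U s x) < e"
  proof (intro exI[where x=del] conjI allI impI del)
    fix t assume t: "dist t s < del"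
    have eq: "U t x - U s x = U t (x - d) + (U t d - U s d) + U s (d - x)"
      by (simp add: U_diff_right)
    have "norm (U t d - U s d) \<le> norm (A d) * \<bar>t - s\<bar>" by (rule U_lip_D[OF dD])
    also have "\<dots> \<le> norm (A d) * del" using t by (intro mult_left_mono) (auto simp: dist_real_def)
    also have "\<dots> \<le> e / 3"
    proof -
      have p: "0 < norm (A d) + 1" by (rule add_nonneg_pos) simp_all
      have r: "norm (A d) / (norm (A d) + 1) \<le> 1" using p by (simp add: divide_le_eq_1)
      have "norm (A d) * del = e / 3 * (norm (A d) / (norm (A d) + 1))" by (simp add: del_def)
      also have "\<dots> \<le> e / 3 * 1" using r e by (intro mult_left_mono) auto
      finally show ?thesis by simp
    qed
    finally have 2: "norm (U t d - U s d) \<le> e / 3" .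
    have 1: "norm (U t (x - d)) < e / 3" using xd by (simp add: U_norm dist_norm)
    have 3: "norm (U s (d - x)) < e / 3" using xd by (simp add: U_norm dist_norm norm_minus_commute)
    have "norm (U t x - U s x) \<le> norm (U t (x - d)) + norm (U t d - U s d) + norm (U s (d - x))"
      unfolding eq by (rule norm_triangle3)
    also have "\<dots> < e" using 1 2 3 by linarith
    finally show "dist (U t x) (U s x) < e" by (simp add: dist_norm)
  qed
qed

lemma U_deriv_D:
  assumes x: "x \<in> D"
  shows "((\<lambda>t. U t x) has_vector_derivative A x) (at 0)"
  unfolding has_vector_derivative_def has_derivative_at_alt
proof (intro conjI allI impI)
  show "bounded_linear (\<lambda>h. h *\<^sub>R A x)" by (rule bounded_linear_scaleR_left)
  fix e :: real assume e: "e > 0"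
  define a where "a = A x"
  from U_cont_at[where x=a and s=0] e obtain d0 where d0: "d0 > 0" and
    d0c: "\<And>t::real. dist t 0 < d0 \<Longrightarrow> dist (U t a) (U 0 a) < e/2"
    unfolding continuous_at_eps_delta by (metis half_gt_zero)
  define del where "del = min d0 1"
  have del: "del > 0" using d0 by (simp add: del_def)
  show "\<exists>d>0. \<forall>y::real. norm (y - 0) < d \<longrightarrow> norm (U y x - U 0 x - (y - 0) *\<^sub>R A x) \<le> e * norm (y - 0)"
  proof (intro exI[where x=del] conjI allI impI del)
    fix t :: real assume t: "norm (t - 0) < del"
    show "norm (U t x - U 0 x - (t - 0) *\<^sub>R A x) \<le> e * norm (t - 0)"
    proof (cases "t = 0")
      case True then show ?thesis by (simp add: U_0)
    next
      case False
      then have tpos: "\<bar>t\<bar> > 0" by simp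
      have "\<forall>\<^sub>F n in sequentially. dist (ap (Bop n) x) a < e/16"
        using tendstoD[OF Bop_conv[OF x], of "e/16"] e by (simp add: a_def)
      then have ev1: "\<forall>\<^sub>F n in sequentially. norm (ap (Bop n) x - a) \<le> e/16"
        by (rule eventually_mono) (simp add: dist_norm)
      obtain N2 where N2: "\<forall>n\<ge>N2. \<forall>\<tau>. \<bar>\<tau>\<bar> \<le> 1 \<longrightarrow> norm (ap (E n \<tau>) a - U \<tau> a) \<le> e/8"
        using U_unif[of "e/8" 1 a] e by auto
      have ev2: "\<forall>\<^sub>F n in sequentially. \<forall>\<tau>. \<bar>\<tau>\<bar> \<le> 1 \<longrightarrow> norm (ap (E n \<tau>) a - U \<tau> a) \<le> e/8"
        using N2 by (auto simp: eventually_sequentially)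
      have "\<forall>\<^sub>F n in sequentially. dist (ap (E n t) x) (U t x) < e * \<bar>t\<bar> / 8"
        using tendstoD[OF U_conv[of t x], of "e * \<bar>t\<bar> / 8"] e tpos by simp
      then have ev3: "\<forall>\<^sub>F n in sequentially. norm (ap (E n t) x - U t x) \<le> e * \<bar>t\<bar> / 8"
        by (rule eventually_mono) (simp add: dist_norm)
      from eventually_conj[OF ev1 eventually_conj[OF ev2 ev3]] obtain n where
        n1: "norm (ap (Bop n) x - a) \<le> e/16" and
        n2: "\<forall>\<tau>. \<bar>\<tau>\<bar> \<le> 1 \<longrightarrow> norm (ap (E n \<tau>) a - U \<tau> a) \<le> e/8" and
        n3: "norm (ap (E n t) x - U t x) \<le> e * \<bar>t\<bar> / 8"
        unfolding eventually_sequentially by blast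
      define g where "g \<tau> = ap (E n \<tau>) x - \<tau> *\<^sub>R ap (Bop n) x" for \<tau>
      define g' where "g' \<tau> = ap (E n \<tau>) (ap (Bop n) x) - ap (Bop n) x" for \<tau>
      have gd: "(g has_vector_derivative g' \<tau>) (at \<tau>)" for \<tau>
        unfolding g_def[abs_def] g'_def
        by (auto intro!: derivative_eq_intros apE_deriv)
      have gb: "norm (g' \<tau>) \<le> 3 * e / 4" if "\<tau> \<in> closed_segment 0 t" for \<tau>
      proof -
        have tau: "\<bar>\<tau>\<bar> \<le> \<bar>t\<bar>" using that by (auto simp: closed_segment_eq_real_ivl split: if_splits)
        then have tau1: "\<bar>\<tau>\<bar> \<le> 1" and tau0: "dist \<tau> 0 < d0"
          using t by (auto simp: del_def)
        have eq: "g' \<tau> = ap (E n \<tau>) (ap (Bop n) x - a) + (ap (E n \<tau>) a - U \<tau> a) + (U \<tau> a - a) + (a - ap (Bop n) x)"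
          by (simp add: g'_def ap_diff_right)
        have "norm (g' \<tau>) \<le> norm (ap (E n \<tau>) (ap (Bop n) x - a)) + norm (ap (E n \<tau>) a - U \<tau> a) + norm (U \<tau> a - a) + norm (a - ap (Bop n) x)"
          unfolding eq by (rule norm_triangle4)
        also have "\<dots> \<le> e/16 + e/8 + e/2 + e/16"
        proof -
          have "norm (ap (E n \<tau>) (ap (Bop n) x - a)) \<le> e/16" using n1 by (simp add: E_iso)
          moreover have "norm (ap (E n \<tau>) a - U \<tau> a) \<le> e/8" using n2 tau1 by blast
          moreover have "norm (U \<tau> a - a) \<le> e/2" using d0c[OF tau0] by (simp add: U_0 dist_norm)
          moreover have "norm (a - ap (Bop n) x) \<le> e/16" using n1 by (simp add: norm_minus_commute)
          ultimately show ?thesis by linarith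
        qed
        finally show ?thesis by simp
      qed
      have "norm (g t - g 0) \<le> 3 * e / 4 * \<bar>t - 0\<bar>" by (rule mvt_vec[OF gd gb])
      then have G: "norm (g t - g 0) \<le> 3 * e / 4 * \<bar>t\<bar>" by simp
      have eq: "U t x - U 0 x - (t - 0) *\<^sub>R A x = (U t x - ap (E n t) x) + (g t - g 0) + t *\<^sub>R (ap (Bop n) x - a)"
        by (simp add: g_def U_0 a_def algebra_simps)
      have "norm (U t x - U 0 x - (t - 0) *\<^sub>R A x) \<le> norm (U t x - ap (E n t) x) + norm (g t - g 0) + norm (t *\<^sub>R (ap (Bop n) x - a))"
        unfolding eq by (rule norm_triangle3)
      also have "\<dots> \<le> e * \<bar>t\<bar> / 8 + 3 * e / 4 * \<bar>t\<bar> + \<bar>t\<bar> * (e/16)"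
      proof -
        have "norm (U t x - ap (E n t) x) \<le> e * \<bar>t\<bar> / 8" using n3 by (simp add: norm_minus_commute)
        moreover have "norm (t *\<^sub>R (ap (Bop n) x - a)) \<le> \<bar>t\<bar> * (e/16)"
          using mult_left_mono[OF n1, of "\<bar>t\<bar>"] by simp
        ultimately show ?thesis using G by linarith
      qed
      also have "\<dots> \<le> e * norm (t - 0)" using e by (simp add: field_simps)
      finally show ?thesis .
    qed
  qed
qed

end

lemma iso_deriv_orth:
  fixes f :: "real \<Rightarrow> 'a::real_inner"
  assumes n: "\<And>t. norm (f t) = norm (f 0)" and d: "(f has_vector_derivative v) (at 0)"
  shows "inner v (f 0) = 0"
proof -
  have 1: "((\<lambda>t. inner (f t) (f t)) has_derivative (\<lambda>h. inner (f 0) (h *\<^sub>R v) + inner (h *\<^sub>R v) (f 0))) (at 0)"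
    using d unfolding has_vector_derivative_def by (intro has_derivative_inner) auto
  have "(\<lambda>t. inner (f t) (f t)) = (\<lambda>t. norm (f 0)^2)"
    using n by (auto simp: power2_norm_eq_inner[symmetric])
  then have 2: "((\<lambda>t. inner (f t) (f t)) has_derivative (\<lambda>h. 0)) (at 0)" by simp
  have "(\<lambda>h. inner (f 0) (h *\<^sub>R v) + inner (h *\<^sub>R v) (f 0)) = (\<lambda>h. 0)"
    by (rule has_derivative_unique[OF 1 2])
  from fun_cong[OF this, of 1] show ?thesis by (simp add: inner_commute)
qed

context sa
begin

lemma U_diff_D:
  assumes "(\<lambda>t. U t x) differentiable (at 0)"
  shows "x \<in> D"
proof -
  obtain v where v: "((\<lambda>t. U t x) has_vector_derivative v) (at 0)"
    using assms vector_derivative_works by blast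
  have one: "(1::real) \<noteq> 0" by simp
  define z where "z = R 1 (x - v)"
  have zD: "z \<in> D" using R_D[OF one] by (simp add: z_def)
  have Az: "A z = z - (x - v)" using A_R[OF one, of "x - v"] by (simp add: z_def)
  define w where "w = x - z"
  have "((\<lambda>t. U t x - U t z) has_vector_derivative v - A z) (at 0)"
    by (rule has_vector_derivative_diff[OF v U_deriv_D[OF zD]])
  then have dw: "((\<lambda>t. U t w) has_vector_derivative w) (at 0)"
    using Az by (simp add: w_def U_diff_right algebra_simps)
  have "inner w (U 0 w) = 0"
    by (rule iso_deriv_orth[OF _ dw]) (simp add: U_norm)
  then have "w = 0" by (simp add: U_0)
  then show ?thesis using zD by (simp add: w_def)
qed

definition Ub :: "real \<Rightarrow> 'a \<Rightarrow>\<^sub>L 'a" where "Ub t = Blinfun (U t)"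

lemma Ub_apply[simp]: "blinfun_apply (Ub t) = U t"
  by (simp add: Ub_def bounded_linear_Blinfun_apply U_bl)

lemma U_scaleC: "U t (a *\<^sub>C x) = a *\<^sub>C U t x"
  by (simp add: scaleC_decomp[of a x] scaleC_decomp[of a "U t x"] U_add_right U_scaleR_right U_ii)

lemma Ub_unitary: "unitary_op (Ub t)"
  unfolding unitary_op_def
proof (intro conjI)
  show "\<forall>a x. Ub t (a *\<^sub>C x) = a *\<^sub>C Ub t x" by (simp add: U_scaleC)
  show "\<forall>x. norm (Ub t x) = norm x" by (simp add: U_norm)
  show "surj (blinfun_apply (Ub t))"
  proof (rule surjI)
    fix y show "blinfun_apply (Ub t) (U (- t) y) = y"
      using U_add[of t "- t" y] by (simp add: U_0)
  qed
qed

lemma Ub_group: "unitary_group Ub"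
proof -
  have "Ub 0 = id_blinfun" by (rule blinfun_eqI) (simp add: U_0)
  moreover have "Ub (s + t) = Ub s o\<^sub>L Ub t" for s t by (rule blinfun_eqI) (simp add: U_add)
  moreover have "continuous_on UNIV (\<lambda>t. blinfun_apply (Ub t) x)" for x
    by (simp add: continuous_at_imp_continuous_on U_cont_at)
  ultimately show ?thesis unfolding unitary_group_def using Ub_unitary by blast
qed

lemma Ub_gen: "generated_by Ub D h"
  unfolding generated_by_def
proof (intro conjI ballI)
  show "D = {x. (\<lambda>t. blinfun_apply (Ub t) x) differentiable at 0}"
  proof (intro equalityI subsetI)
    fix x assume "x \<in> D"
    then show "x \<in> {x. (\<lambda>t. blinfun_apply (Ub t) x) differentiable at 0}"
      using U_deriv_D by (auto intro: differentiableI_vector)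
  next
    fix x assume "x \<in> {x. (\<lambda>t. blinfun_apply (Ub t) x) differentiable at 0}"
    then show "x \<in> D" using U_diff_D by simp
  qed
  fix x assume "x \<in> D"
  then show "((\<lambda>t. blinfun_apply (Ub t) x) has_vector_derivative \<i> *\<^sub>C h x) (at 0)"
    using U_deriv_D by (simp add: A_def)
qed

lemma gen_deriv0:
  assumes "generated_by G D h" "x \<in> D"
  shows "((\<lambda>t. G t x) has_vector_derivative A x) (at 0)"
  using assms by (simp add: generated_by_def A_def)

lemma gen_D_iff:
  assumes "generated_by G D h"
  shows "x \<in> D \<longleftrightarrow> (\<lambda>t. G t x) differentiable (at 0)"
  using assms by (auto simp: generated_by_def)

lemma ug_add: "unitary_group G \<Longrightarrow> G (s + t) x = G s (G t x)"
  by (simp add: unitary_group_def)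

lemma ug_0: "unitary_group G \<Longrightarrow> G 0 x = x"
  by (simp add: unitary_group_def)

lemma ug_norm: "unitary_group G \<Longrightarrow> norm (G t x) = norm x"
  by (simp add: unitary_group_def unitary_op_def)

lemma ug_scaleC: "unitary_group G \<Longrightarrow> G t (a *\<^sub>C x) = a *\<^sub>C G t x"
  by (simp add: unitary_group_def unitary_op_def)

lemma ug_cont: "unitary_group G \<Longrightarrow> continuous_on UNIV (\<lambda>t. G t x)"
  by (simp add: unitary_group_def)

lemma shift_deriv:
  fixes f :: "real \<Rightarrow> 'b::real_normed_vector"
  assumes "(f has_vector_derivative v) (at 0)"
  shows "((\<lambda>\<tau>. f (\<tau> - s)) has_vector_derivative v) (at s)"
proof -
  have "((f \<circ> (\<lambda>\<tau>. \<tau> - s)) has_vector_derivative 1 *\<^sub>R v) (at s)"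
    by (rule vector_diff_chain_at) (auto intro!: derivative_eq_intros simp: assms)
  then show ?thesis by (simp add: o_def)
qed

lemma gen_deriv_at:
  assumes G: "unitary_group G" "generated_by G D h" and x: "x \<in> D"
  shows "((\<lambda>t. G t x) has_vector_derivative G s (A x)) (at s)"
proof -
  have "((\<lambda>\<tau>. G (\<tau> - s) x) has_vector_derivative A x) (at s)"
    by (rule shift_deriv[OF gen_deriv0[OF G(2) x]])
  from bounded_linear.has_vector_derivative[OF blinfun.bounded_linear_right this, of "G s"]
  have "((\<lambda>\<tau>. G s (G (\<tau> - s) x)) has_vector_derivative G s (A x)) (at s)" .
  moreover have "(\<lambda>\<tau>. G s (G (\<tau> - s) x)) = (\<lambda>t. G t x)"
    using ug_add[OF G(1), of s] by (auto simp: ug_add[OF G(1), symmetric])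
  ultimately show ?thesis by simp
qed

lemma gen_inv:
  assumes G: "unitary_group G" "generated_by G D h" and x: "x \<in> D"
  shows "G s x \<in> D \<and> A (G s x) = G s (A x)"
proof -
  have comm: "G t (G s x) = G s (G t x)" for t
    using ug_add[OF G(1), of t s x] ug_add[OF G(1), of s t x] by (simp add: add.commute)
  have d: "((\<lambda>t. G s (G t x)) has_vector_derivative G s (A x)) (at 0)"
    by (rule bounded_linear.has_vector_derivative[OF blinfun.bounded_linear_right gen_deriv0[OF G(2) x]])
  then have d': "((\<lambda>t. G t (G s x)) has_vector_derivative G s (A x)) (at 0)" by (simp add: comm)
  then have "(\<lambda>t. G t (G s x)) differentiable (at 0)" by (rule differentiableI_vector)
  then have D: "G s x \<in> D" using gen_D_iff[OF G(2)] by simp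
  have "A (G s x) = G s (A x)"
    by (rule vector_derivative_unique_at[OF gen_deriv0[OF G(2) D] d'])
  with D show ?thesis by simp
qed

lemma gen_unique:
  assumes G: "unitary_group G" "generated_by G D h"
    and G': "unitary_group G'" "generated_by G' D h"
  shows "G = G'"
proof
  fix s
  have onD: "G s x = G' s x" if x: "x \<in> D" for x
  proof -
    define e where "e t = G t x - G' t x" for t
    have eD: "e t \<in> D" for t using gen_inv[OF G x] gen_inv[OF G' x] by (simp add: e_def Ddiff)
    have de: "(e has_vector_derivative A (e t)) (at t)" for t
    proof -
      have "(e has_vector_derivative G t (A x) - G' t (A x)) (at t)"
        unfolding e_def[abs_def] by (rule has_vector_derivative_diff[OF gen_deriv_at[OF G x] gen_deriv_at[OF G' x]])
      moreover have "G t (A x) - G' t (A x) = A (e t)"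
        using gen_inv[OF G x, of t] gen_inv[OF G' x, of t] by (simp add: e_def A_diff)
      ultimately show ?thesis by simp
    qed
    have "norm (e s) = norm (e 0)"
      by (rule const_norm[OF de]) (rule A_skew[OF eD])
    then show ?thesis by (simp add: e_def ug_0[OF G(1)] ug_0[OF G'(1)])
  qed
  show "G s = G' s"
  proof (rule blinfun_eqI)
    fix x
    show "G s x = G' s x"
    proof (rule dense_closed_prop[OF dense, where P="\<lambda>x. G s x = G' s x"])
      show "closed {x. G s x = G' s x}"
        by (intro closed_Collect_eq continuous_intros)
      show "\<forall>x\<in>D. G s x = G' s x" using onD by blast
    qed
  qed
qed

lemma exp_ith_eq: "exp_ith D h = Ub"
  unfolding exp_ith_def
proof (rule the_equality)
  show "unitary_group Ub \<and> generated_by Ub D h" using Ub_group Ub_gen by simp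
  fix G assume "unitary_group G \<and> generated_by G D h"
  then show "G = Ub" using gen_unique Ub_group Ub_gen by blast
qed

lemma exp_ith_props: "unitary_group (exp_ith D h) \<and> generated_by (exp_ith D h) D h"
  using exp_ith_eq Ub_group Ub_gen by simp

end

lemma ubp:
  fixes S :: "nat \<Rightarrow> 'a::{real_normed_vector,complete_space} \<Rightarrow> 'b::real_normed_vector"
  assumes lin: "\<And>n. bounded_linear (S n)"
    and bd: "\<And>x. \<exists>B. \<forall>n. norm (S n x) \<le> B"
  shows "\<exists>M. \<forall>n x. norm (S n x) \<le> M * norm x"
proof -
  define F where "F m = {x. \<forall>n. norm (S n x) \<le> real m}" for m :: nat
  have clF: "closed (F m)" for m
  proof -
    have "F m = (\<Inter>n. {x. norm (S n x) \<le> real m})" by (auto simp: F_def)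
    moreover have "closed {x. norm (S n x) \<le> real m}" for n
      using lin[of n] by (intro closed_Collect_le continuous_intros) (simp add: linear_continuous_on)
    ultimately show ?thesis by auto
  qed
  have cover: "(\<Union>m. F m) = UNIV"
  proof (intro equalityI subsetI)
    fix x
    obtain B where B: "\<forall>n. norm (S n x) \<le> B" using bd by blast
    obtain m :: nat where "B \<le> real m" using real_arch_simple by blast
    then have "x \<in> F m" using B by (auto simp: F_def intro: order_trans)
    then show "x \<in> (\<Union>m. F m)" by blast
  qed simp
  have "\<exists>m. interior (F m) \<noteq> {}"
  proof (rule ccontr)
    assume "\<not> ?thesis"
    then have e: "\<And>m. interior (F m) = {}" by blast
    have "euclidean interior_of \<Union>(range F) = {}"
    proof (rule Baire_category_alt)
      show "completely_metrizable_space (euclidean::'a topology) \<or> locally_compact_space (euclidean::'a topology) \<and> regular_space (euclidean::'a topology)"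
        by (simp add: completely_metrizable_space_euclidean)
      show "countable (range F)" by simp
      fix T assume "T \<in> range F"
      then show "closedin euclidean T \<and> euclidean interior_of T = {}"
        using clF e by (auto simp: closed_closedin[symmetric])
    qed
    then show False using cover by simp
  qed
  then obtain m x0 where "x0 \<in> interior (F m)" by blast
  then obtain r where r: "r > 0" and ball0: "ball x0 r \<subseteq> interior (F m)"
    using open_contains_ball_eq[OF open_interior] by blast
  then have ball: "ball x0 r \<subseteq> F m" using interior_subset by blast
  have x0F: "x0 \<in> F m" using ball r by auto
  have "norm (S n y) \<le> (4 * real m / r) * norm y" for n y
  proof (cases "y = 0")
    case True then show ?thesis using lin[of n] by (simp add: linear_simps)
  next
    case False
    define z where "z = (r / (2 * norm y)) *\<^sub>R y"
    have nz: "norm z = r / 2" using False r by (simp add: z_def)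
    then have "x0 + z \<in> ball x0 r" using r by (simp add: dist_norm)
    then have "x0 + z \<in> F m" using ball by auto
    then have 1: "norm (S n (x0 + z)) \<le> real m" by (simp add: F_def)
    have 2: "norm (S n x0) \<le> real m" using x0F by (simp add: F_def)
    have "S n z = S n (x0 + z) - S n x0" using lin[of n] by (simp add: linear_simps)
    then have "norm (S n z) \<le> norm (S n (x0 + z)) + norm (S n x0)" by (simp add: norm_triangle_ineq4)
    then have "norm (S n z) \<le> 2 * real m" using 1 2 by linarith
    moreover have "S n z = (r / (2 * norm y)) *\<^sub>R S n y" using lin[of n] by (simp add: z_def linear_simps)
    ultimately have "(r / (2 * norm y)) * norm (S n y) \<le> 2 * real m" using r by simp
    then have "r * norm (S n y) \<le> 4 * real m * norm y" using False r by (simp add: field_simps)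
    then show ?thesis using r by (simp add: field_simps)
  qed
  then show ?thesis by blast
qed

lemma PR:
  fixes W :: "real \<Rightarrow> 'a::real_normed_vector \<Rightarrow>\<^sub>L 'a"
  assumes iso: "\<And>t y. norm (W t y) \<le> norm y"
    and W0: "\<And>y. W 0 y = y"
    and dW: "((\<lambda>t. W t \<xi>) has_vector_derivative a) (at 0)"
    and df: "(f has_vector_derivative b) (at 0)" and f0: "f 0 = \<xi>"
    and cW: "isCont (\<lambda>t. W t b) 0"
  shows "((\<lambda>t. W t (f t)) has_vector_derivative a + b) (at 0)"
  unfolding has_vector_derivative_def has_derivative_at_alt
proof (intro conjI allI impI)
  show "bounded_linear (\<lambda>h. h *\<^sub>R (a + b))" by (rule bounded_linear_scaleR_left)
  fix e :: real assume e: "e > 0"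
  then have e3: "e/3 > 0" by simp
  from dW[unfolded has_vector_derivative_def has_derivative_at_alt] e3 obtain d1 where
    d1: "d1 > 0" "\<And>y. norm (y - 0) < d1 \<Longrightarrow> norm (W y \<xi> - W 0 \<xi> - (y - 0) *\<^sub>R a) \<le> e/3 * norm (y - 0)"
    by blast
  from df[unfolded has_vector_derivative_def has_derivative_at_alt] e3 obtain d2 where
    d2: "d2 > 0" "\<And>y. norm (y - 0) < d2 \<Longrightarrow> norm (f y - f 0 - (y - 0) *\<^sub>R b) \<le> e/3 * norm (y - 0)"
    by blast
  from cW[unfolded continuous_at_eps_delta] e3 obtain d3 where
    d3: "d3 > 0" "\<And>y. dist y 0 < d3 \<Longrightarrow> dist (W y b) (W 0 b) < e/3"
    by blast
  show "\<exists>d>0. \<forall>y::real. norm (y - 0) < d \<longrightarrow> norm (W y (f y) - W 0 (f 0) - (y - 0) *\<^sub>R (a + b)) \<le> e * norm (y - 0)"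
  proof (intro exI[where x="min d1 (min d2 d3)"] conjI allI impI)
    show "min d1 (min d2 d3) > 0" using d1 d2 d3 by simp
    fix y :: real assume y: "norm (y - 0) < min d1 (min d2 d3)"
    have eq: "W y (f y) - W 0 (f 0) - (y - 0) *\<^sub>R (a + b) =
      (W y \<xi> - W 0 \<xi> - (y - 0) *\<^sub>R a) + W y (f y - f 0 - (y - 0) *\<^sub>R b) + y *\<^sub>R (W y b - b)"
      by (simp add: f0 W0 blinfun.bilinear_simps algebra_simps)
    have 1: "norm (W y \<xi> - W 0 \<xi> - (y - 0) *\<^sub>R a) \<le> e/3 * norm (y - 0)" using d1 y by simp
    have 2: "norm (W y (f y - f 0 - (y - 0) *\<^sub>R b)) \<le> e/3 * norm (y - 0)"
      using d2(2)[of y] y iso[of y "f y - f 0 - (y - 0) *\<^sub>R b"] by linarith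
    have "norm (W y b - b) \<le> e/3" using d3(2)[of y] y W0[of b] by (simp add: dist_norm)
    then have "\<bar>y\<bar> * norm (W y b - b) \<le> \<bar>y\<bar> * (e/3)" by (rule mult_left_mono) simp
    then have 3: "norm (y *\<^sub>R (W y b - b)) \<le> e/3 * norm (y - 0)"
      by (simp add: mult.commute)
    have "norm (W y (f y) - W 0 (f 0) - (y - 0) *\<^sub>R (a + b)) \<le>
      norm (W y \<xi> - W 0 \<xi> - (y - 0) *\<^sub>R a) + norm (W y (f y - f 0 - (y - 0) *\<^sub>R b)) + norm (y *\<^sub>R (W y b - b))"
      unfolding eq by (rule norm_triangle3)
    also have "\<dots> \<le> e * norm (y - 0)" using 1 2 3 by simp
    finally show "norm (W y (f y) - W 0 (f 0) - (y - 0) *\<^sub>R (a + b)) \<le> e * norm (y - 0)" .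
  qed
qed

lemma diff_quot_seq:
  fixes f :: "real \<Rightarrow> 'a::real_normed_vector"
  assumes "(f has_vector_derivative v) (at 0)"
  shows "(\<lambda>n. real (Suc n) *\<^sub>R (f (1 / real (Suc n)) - f 0)) \<longlonglongrightarrow> v"
proof (rule LIMSEQ_I)
  fix e :: real assume e: "e > 0"
  then have "e/2 > 0" by simp
  with assms[unfolded has_vector_derivative_def has_derivative_at_alt] obtain d where
    d: "d > 0" "\<And>y. norm (y - 0) < d \<Longrightarrow> norm (f y - f 0 - (y - 0) *\<^sub>R v) \<le> e/2 * norm (y - 0)"
    by blast
  obtain N :: nat where N: "inverse (real (Suc N)) < d" using reals_Archimedean[OF d(1)] by blast
  show "\<exists>N. \<forall>n\<ge>N. norm (real (Suc n) *\<^sub>R (f (1 / real (Suc n)) - f 0) - v) < e"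
  proof (intro exI[where x=N] allI impI)
    fix n assume n: "n \<ge> N"
    have "1 / real (Suc n) \<le> inverse (real (Suc N))" using n by (simp add: divide_inverse le_imp_inverse_le)
    then have "norm (1 / real (Suc n) - 0) < d" using N by simp
    from d(2)[OF this] have "norm (f (1 / real (Suc n)) - f 0 - (1 / real (Suc n)) *\<^sub>R v) \<le> e/2 / real (Suc n)"
      by simp
    then have "real (Suc n) * norm (f (1 / real (Suc n)) - f 0 - (1 / real (Suc n)) *\<^sub>R v) \<le> e/2"
      by (simp add: field_simps)
    moreover have "real (Suc n) *\<^sub>R (f (1 / real (Suc n)) - f 0) - v = real (Suc n) *\<^sub>R (f (1 / real (Suc n)) - f 0 - (1 / real (Suc n)) *\<^sub>R v)"
      by (simp add: algebra_simps)
    ultimately have "norm (real (Suc n) *\<^sub>R (f (1 / real (Suc n)) - f 0) - v) \<le> e/2" by simp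
    then show "norm (real (Suc n) *\<^sub>R (f (1 / real (Suc n)) - f 0) - v) < e" using e by simp
  qed
qed

lemma ug_isCont: "unitary_group G \<Longrightarrow> isCont (\<lambda>t. G t y) s"
  by (simp add: unitary_group_def continuous_on_eq_continuous_at)

lemma ug_inv:
  assumes g: "unitary_group G" shows "G (- t) (G t y) = y"
proof -
  have 1: "G (- t + t) = G (- t) o\<^sub>L G t" using g unfolding unitary_group_def by blast
  have 2: "G 0 = id_blinfun" using g unfolding unitary_group_def by blast
  have "G (- t) (G t y) = (G (- t) o\<^sub>L G t) y" by simp
  also have "\<dots> = G (- t + t) y" by (simp only: 1)
  also have "\<dots> = y" using 2 by simp
  finally show ?thesis .
qed

lemma ug_inv2: "unitary_group G \<Longrightarrow> G t (G (- t) y) = y"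
  using ug_inv[of G "- t" y] by simp

lemma ug_norm': "unitary_group G \<Longrightarrow> norm (G t y) = norm y"
  by (simp add: unitary_group_def unitary_op_def)

lemma ug_add': "unitary_group G \<Longrightarrow> G (s + t) y = G s (G t y)"
  by (simp add: unitary_group_def)

lemma ug_0': "unitary_group G \<Longrightarrow> G 0 y = y"
  by (simp add: unitary_group_def)

lemma reflect_deriv:
  fixes f :: "real \<Rightarrow> 'b::real_normed_vector"
  assumes "(f has_vector_derivative v) (at 0)"
  shows "((\<lambda>t. f (- t)) has_vector_derivative - v) (at 0)"
proof -
  have "((f \<circ> uminus) has_vector_derivative (-1) *\<^sub>R v) (at 0)"
    by (rule vector_diff_chain_at) (auto intro!: derivative_eq_intros simp: assms)
  then show ?thesis by (simp add: o_def)
qed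

theorem lemma8p1p1:
  fixes Dh Dk :: "'a::{complex_inner, complete_space} set"
    and h k :: "'a \<Rightarrow> 'a"
  assumes sep: "separable_space TYPE('a)"
    and sa_h: "self_adjoint_op Dh h"
    and sa_k: "self_adjoint_op Dk k"
  defines "w \<equiv> w_op Dh h Dk k"
  shows "(w differentiable (at 0) \<longrightarrow> (\<forall>\<xi>. (\<lambda>t. w t \<xi>) differentiable (at 0)))
    \<and> ((\<forall>\<xi>. (\<lambda>t. w t \<xi>) differentiable (at 0)) \<longrightarrow>
         (Dh = Dk \<and> (\<exists>C. \<forall>\<xi>\<in>Dh. norm (h \<xi> - k \<xi>) \<le> C * norm \<xi>)))
    \<and> ((Dh = Dk \<and> (\<exists>C. \<forall>\<xi>\<in>Dh. norm (h \<xi> - k \<xi>) \<le> C * norm \<xi>)) \<longrightarrow>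
         (\<exists>D. csubspace D \<and> closure D = UNIV \<and> D \<subseteq> Dh \<inter> Dk
            \<and> (\<exists>C. \<forall>\<xi>\<in>D. norm (h \<xi> - k \<xi>) \<le> C * norm \<xi>)
            \<and> (\<forall>t. \<forall>\<xi>\<in>D. exp_ith Dk k t \<xi> \<in> D)))
    \<and> ((\<exists>D. csubspace D \<and> closure D = UNIV \<and> D \<subseteq> Dh \<inter> Dk
            \<and> (\<exists>C. \<forall>\<xi>\<in>D. norm (h \<xi> - k \<xi>) \<le> C * norm \<xi>)
            \<and> (\<forall>t. \<forall>\<xi>\<in>D. exp_ith Dk k t \<xi> \<in> D)) \<longrightarrow>
         (\<exists>L. L-lipschitz_on UNIV w))"
proof -
  interpret H: sa Dh h by (rule sa.intro) (rule sa_h)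
  interpret K: sa Dk k by (rule sa.intro) (rule sa_k)
  define U where "U = exp_ith Dh h"
  define V where "V = exp_ith Dk k"
  have Ug: "unitary_group U" "generated_by U Dh h" using H.exp_ith_props by (simp_all add: U_def)
  have Vg: "unitary_group V" "generated_by V Dk k" using K.exp_ith_props by (simp_all add: V_def)
  have w_apply: "w t y = U t (V (- t) y)" for t y
    by (simp add: w_def w_op_def U_def V_def)
  have wiso: "norm (w t y) = norm y" for t y by (simp add: w_apply ug_norm'[OF Ug(1)] ug_norm'[OF Vg(1)])
  have w0: "w 0 y = y" for y by (simp add: w_apply ug_0'[OF Ug(1)] ug_0'[OF Vg(1)])
  have Vref: "((\<lambda>t. V (- t) \<xi>) has_vector_derivative - K.A \<xi>) (at 0)" if "\<xi> \<in> Dk" for \<xi>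
    by (rule reflect_deriv[OF K.gen_deriv0[OF Vg(2) that]])
  have wDD: "((\<lambda>t. w t \<zeta>) has_vector_derivative H.A \<zeta> - K.A \<zeta>) (at 0)" if "\<zeta> \<in> Dh" "\<zeta> \<in> Dk" for \<zeta>
  proof -
    have "((\<lambda>t. U t (V (- t) \<zeta>)) has_vector_derivative H.A \<zeta> + - K.A \<zeta>) (at 0)"
    proof (rule PR[where W=U])
      show "norm (U t y) \<le> norm y" for t y by (simp add: ug_norm'[OF Ug(1)])
      show "U 0 y = y" for y by (simp add: ug_0'[OF Ug(1)])
      show "((\<lambda>t. U t \<zeta>) has_vector_derivative H.A \<zeta>) (at 0)" by (rule H.gen_deriv0[OF Ug(2) that(1)])
      show "((\<lambda>t. V (- t) \<zeta>) has_vector_derivative - K.A \<zeta>) (at 0)" by (rule Vref[OF that(2)])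
      show "V (- 0) \<zeta> = \<zeta>" by (simp add: ug_0'[OF Vg(1)])
      show "isCont (\<lambda>t. U t (- K.A \<zeta>)) 0" by (rule ug_isCont[OF Ug(1)])
    qed
    then show ?thesis by (simp add: w_apply)
  qed
  have part1: "w differentiable (at 0) \<longrightarrow> (\<forall>\<xi>. (\<lambda>t. w t \<xi>) differentiable (at 0))"
  proof (intro impI allI)
    fix \<xi> assume "w differentiable (at 0)"
    then obtain D' where "(w has_derivative D') (at 0)" by (auto simp: differentiable_def)
    then have "((\<lambda>t. blinfun_apply (w t) \<xi>) has_derivative (\<lambda>x. blinfun_apply (D' x) \<xi>)) (at 0)"
      by (rule bounded_linear.has_derivative[OF blinfun.bounded_linear_left])
    then show "(\<lambda>t. w t \<xi>) differentiable (at 0)" by (auto simp: differentiable_def)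
  qed
  have part2: "(\<forall>\<xi>. (\<lambda>t. w t \<xi>) differentiable (at 0)) \<longrightarrow>
         (Dh = Dk \<and> (\<exists>C. \<forall>\<xi>\<in>Dh. norm (h \<xi> - k \<xi>) \<le> C * norm \<xi>))"
  proof
    assume hb: "\<forall>\<xi>. (\<lambda>t. w t \<xi>) differentiable (at 0)"
    define T where "T \<xi> = vector_derivative (\<lambda>t. w t \<xi>) (at 0)" for \<xi>
    have dT: "((\<lambda>t. w t \<xi>) has_vector_derivative T \<xi>) (at 0)" for \<xi>
      using hb vector_derivative_works unfolding T_def by blast
    have cw: "isCont (\<lambda>t. w t y) 0" for y
      using differentiable_imp_continuous_within[of "\<lambda>t. w t y" 0 UNIV] hb by simp
    have kh: "\<xi> \<in> Dh \<and> H.A \<xi> = T \<xi> + K.A \<xi>" if xi: "\<xi> \<in> Dk" for \<xi>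
    proof -
      have "((\<lambda>t. w t (V t \<xi>)) has_vector_derivative T \<xi> + K.A \<xi>) (at 0)"
      proof (rule PR[where W=w])
        show "norm (w t y) \<le> norm y" for t y by (simp add: wiso)
        show "w 0 y = y" for y by (rule w0)
        show "((\<lambda>t. w t \<xi>) has_vector_derivative T \<xi>) (at 0)" by (rule dT)
        show "((\<lambda>t. V t \<xi>) has_vector_derivative K.A \<xi>) (at 0)" by (rule K.gen_deriv0[OF Vg(2) xi])
        show "V 0 \<xi> = \<xi>" by (simp add: ug_0'[OF Vg(1)])
        show "isCont (\<lambda>t. w t (K.A \<xi>)) 0" by (rule cw)
      qed
      moreover have "(\<lambda>t. w t (V t \<xi>)) = (\<lambda>t. U t \<xi>)"
        by (simp add: w_apply ug_inv[OF Vg(1)])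
      ultimately have d: "((\<lambda>t. U t \<xi>) has_vector_derivative T \<xi> + K.A \<xi>) (at 0)" by simp
      then have "\<xi> \<in> Dh" using H.gen_D_iff[OF Ug(2)] differentiableI_vector by blast
      moreover have "H.A \<xi> = T \<xi> + K.A \<xi>"
        using vector_derivative_unique_at[OF H.gen_deriv0[OF Ug(2) \<open>\<xi> \<in> Dh\<close>] d] .
      ultimately show ?thesis by simp
    qed
    have hk: "\<xi> \<in> Dk" if xi: "\<xi> \<in> Dh" for \<xi>
    proof -
      have "((\<lambda>t. U (- t) (w t \<xi>)) has_vector_derivative - H.A \<xi> + T \<xi>) (at 0)"
      proof (rule PR[where W="\<lambda>t. U (- t)"])
        show "norm (U (- t) y) \<le> norm y" for t y by (simp add: ug_norm'[OF Ug(1)])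
        show "U (- 0) y = y" for y by (simp add: ug_0'[OF Ug(1)])
        show "((\<lambda>t. U (- t) \<xi>) has_vector_derivative - H.A \<xi>) (at 0)"
          by (rule reflect_deriv[OF H.gen_deriv0[OF Ug(2) xi]])
        show "((\<lambda>t. w t \<xi>) has_vector_derivative T \<xi>) (at 0)" by (rule dT)
        show "w 0 \<xi> = \<xi>" by (rule w0)
        have "isCont (\<lambda>t. U t (T \<xi>)) (- 0)" by (rule ug_isCont[OF Ug(1)])
        then show "isCont (\<lambda>t. U (- t) (T \<xi>)) 0"
          by (intro isCont_o2[where f=uminus and g="\<lambda>t. U t (T \<xi>)"]) (auto intro: continuous_intros)
      qed
      moreover have "(\<lambda>t. U (- t) (w t \<xi>)) = (\<lambda>t. V (- t) \<xi>)"
        by (simp add: w_apply ug_inv[OF Ug(1)])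
      ultimately have "((\<lambda>t. V (- t) \<xi>) has_vector_derivative - H.A \<xi> + T \<xi>) (at 0)" by simp
      from reflect_deriv[OF this] have "((\<lambda>t. V t \<xi>) has_vector_derivative - (- H.A \<xi> + T \<xi>)) (at 0)"
        by simp
      then show "\<xi> \<in> Dk" using K.gen_D_iff[OF Vg(2)] differentiableI_vector by blast
    qed
    have eq: "Dh = Dk" using kh hk by blast
    define S where "S n y = real (Suc n) *\<^sub>R (w (1 / real (Suc n)) y - y)" for n y
    have Sconv: "(\<lambda>n. S n y) \<longlonglongrightarrow> T y" for y
      using diff_quot_seq[OF dT[of y]] by (simp add: S_def w0)
    have "\<exists>M. \<forall>n y. norm (S n y) \<le> M * norm y"
    proof (rule ubp)
      show "bounded_linear (S n)" for n
        unfolding S_def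
        by (intro bounded_linear_const_scaleR bounded_linear_sub blinfun.bounded_linear_right bounded_linear_ident)
      fix y
      have "Bseq (\<lambda>n. S n y)" using Sconv[of y] by (intro convergent_imp_Bseq) (auto simp: convergent_def)
      then show "\<exists>B. \<forall>n. norm (S n y) \<le> B" unfolding Bseq_def by blast
    qed
    then obtain M where M: "\<And>n y. norm (S n y) \<le> M * norm y" by blast
    have TM: "norm (T y) \<le> M * norm y" for y
      by (rule tendsto_le[OF _ tendsto_const tendsto_norm[OF Sconv]]) (auto simp: M)
    have "\<forall>\<xi>\<in>Dh. norm (h \<xi> - k \<xi>) \<le> M * norm \<xi>"
    proof
      fix \<xi> assume xi: "\<xi> \<in> Dh"
      then have "\<xi> \<in> Dk" using eq by simp
      from kh[OF this] have "T \<xi> = H.A \<xi> - K.A \<xi>" by simp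
      also have "\<dots> = \<i> *\<^sub>C (h \<xi> - k \<xi>)" by (simp add: H.A_def K.A_def scaleC_diff_right)
      finally have "norm (h \<xi> - k \<xi>) = norm (T \<xi>)" by simp
      then show "norm (h \<xi> - k \<xi>) \<le> M * norm \<xi>" using TM by simp
    qed
    with eq show "Dh = Dk \<and> (\<exists>C. \<forall>\<xi>\<in>Dh. norm (h \<xi> - k \<xi>) \<le> C * norm \<xi>)" by blast
  qed
  have part3: "(Dh = Dk \<and> (\<exists>C. \<forall>\<xi>\<in>Dh. norm (h \<xi> - k \<xi>) \<le> C * norm \<xi>)) \<longrightarrow>
         (\<exists>D. csubspace D \<and> closure D = UNIV \<and> D \<subseteq> Dh \<inter> Dk
            \<and> (\<exists>C. \<forall>\<xi>\<in>D. norm (h \<xi> - k \<xi>) \<le> C * norm \<xi>)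
            \<and> (\<forall>t. \<forall>\<xi>\<in>D. exp_ith Dk k t \<xi> \<in> D))"
  proof
    assume as: "Dh = Dk \<and> (\<exists>C. \<forall>\<xi>\<in>Dh. norm (h \<xi> - k \<xi>) \<le> C * norm \<xi>)"
    have inv: "\<forall>t. \<forall>\<xi>\<in>Dh. exp_ith Dk k t \<xi> \<in> Dh"
      using K.gen_inv[OF Vg] as by (simp add: V_def)
    show "\<exists>D. csubspace D \<and> closure D = UNIV \<and> D \<subseteq> Dh \<inter> Dk
            \<and> (\<exists>C. \<forall>\<xi>\<in>D. norm (h \<xi> - k \<xi>) \<le> C * norm \<xi>)
            \<and> (\<forall>t. \<forall>\<xi>\<in>D. exp_ith Dk k t \<xi> \<in> D)"
      using as inv H.csub H.dense by (intro exI[where x=Dh]) auto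
  qed
  have part4: "(\<exists>D. csubspace D \<and> closure D = UNIV \<and> D \<subseteq> Dh \<inter> Dk
            \<and> (\<exists>C. \<forall>\<xi>\<in>D. norm (h \<xi> - k \<xi>) \<le> C * norm \<xi>)
            \<and> (\<forall>t. \<forall>\<xi>\<in>D. exp_ith Dk k t \<xi> \<in> D)) \<longrightarrow>
         (\<exists>L. L-lipschitz_on UNIV w)"
  proof
    assume "\<exists>D. csubspace D \<and> closure D = UNIV \<and> D \<subseteq> Dh \<inter> Dk
            \<and> (\<exists>C. \<forall>\<xi>\<in>D. norm (h \<xi> - k \<xi>) \<le> C * norm \<xi>)
            \<and> (\<forall>t. \<forall>\<xi>\<in>D. exp_ith Dk k t \<xi> \<in> D)"
    then obtain D C where Dd: "closure D = UNIV" and Dsub: "D \<subseteq> Dh \<inter> Dk"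
      and C: "\<forall>\<xi>\<in>D. norm (h \<xi> - k \<xi>) \<le> C * norm \<xi>"
      and Dinv: "\<forall>t. \<forall>\<xi>\<in>D. V t \<xi> \<in> D"
      unfolding V_def by blast
    define C' where "C' = \<bar>C\<bar>"
    have C'0: "C' \<ge> 0" by (simp add: C'_def)
    have onD: "norm (w t \<xi> - w s \<xi>) \<le> C' * norm \<xi> * \<bar>t - s\<bar>" if xi: "\<xi> \<in> D" for \<xi> t s
    proof -
      define \<phi>' where "\<phi>' \<tau> = U \<tau> (H.A (V (- \<tau>) \<xi>) - K.A (V (- \<tau>) \<xi>))" for \<tau>
      have d: "((\<lambda>\<tau>. w \<tau> \<xi>) has_vector_derivative \<phi>' \<sigma>) (at \<sigma>)" for \<sigma>
      proof -
        define \<eta> where "\<eta> = V (- \<sigma>) \<xi>"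
        have etaD: "\<eta> \<in> D" using Dinv xi by (simp add: \<eta>_def)
        then have eta: "\<eta> \<in> Dh" "\<eta> \<in> Dk" using Dsub by auto
        have "((\<lambda>\<tau>. w (\<tau> - \<sigma>) \<eta>) has_vector_derivative H.A \<eta> - K.A \<eta>) (at \<sigma>)"
          by (rule H.shift_deriv[OF wDD[OF eta]])
        from bounded_linear.has_vector_derivative[OF blinfun.bounded_linear_right this, of "U \<sigma>"]
        have "((\<lambda>\<tau>. U \<sigma> (w (\<tau> - \<sigma>) \<eta>)) has_vector_derivative U \<sigma> (H.A \<eta> - K.A \<eta>)) (at \<sigma>)" .
        moreover have "(\<lambda>\<tau>. U \<sigma> (w (\<tau> - \<sigma>) \<eta>)) = (\<lambda>\<tau>. w \<tau> \<xi>)"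
        proof
          fix \<tau>
          have "V (- (\<tau> - \<sigma>)) \<eta> = V (- \<tau>) \<xi>"
            using ug_add'[OF Vg(1), of "- (\<tau> - \<sigma>)" "- \<sigma>" \<xi>] by (simp add: \<eta>_def)
          moreover have "U \<sigma> (U (\<tau> - \<sigma>) y) = U \<tau> y" for y
            using ug_add'[OF Ug(1), of \<sigma> "\<tau> - \<sigma>" y] by simp
          ultimately show "U \<sigma> (w (\<tau> - \<sigma>) \<eta>) = w \<tau> \<xi>" by (simp add: w_apply)
        qed
        ultimately show ?thesis by (simp add: \<phi>'_def \<eta>_def)
      qed
      have b: "norm (\<phi>' \<sigma>) \<le> C' * norm \<xi>" for \<sigma>
      proof -
        define \<eta> where "\<eta> = V (- \<sigma>) \<xi>"
        have etaD: "\<eta> \<in> D" using Dinv xi by (simp add: \<eta>_def)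
        have "norm (\<phi>' \<sigma>) = norm (H.A \<eta> - K.A \<eta>)" by (simp add: \<phi>'_def \<eta>_def ug_norm'[OF Ug(1)])
        also have "\<dots> = norm (h \<eta> - k \<eta>)" by (simp add: H.A_def K.A_def scaleC_diff_right[symmetric])
        also have "\<dots> \<le> C * norm \<eta>" using C etaD by blast
        also have "\<dots> \<le> C' * norm \<eta>" by (simp add: C'_def mult_right_mono)
        also have "norm \<eta> = norm \<xi>" by (simp add: \<eta>_def ug_norm'[OF Vg(1)])
        finally show ?thesis .
      qed
      show ?thesis by (rule mvt_vec[OF d b])
    qed
    have all: "norm (w t \<xi> - w s \<xi>) \<le> C' * \<bar>t - s\<bar> * norm \<xi>" for \<xi> t s
    proof (rule dense_closed_prop[OF Dd, where P="\<lambda>\<xi>. norm (w t \<xi> - w s \<xi>) \<le> C' * \<bar>t - s\<bar> * norm \<xi>"])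
      show "closed {\<xi>. norm (w t \<xi> - w s \<xi>) \<le> C' * \<bar>t - s\<bar> * norm \<xi>}"
        by (intro closed_Collect_le continuous_intros
            linear_continuous_on[OF blinfun.bounded_linear_right])
      show "\<forall>\<xi>\<in>D. norm (w t \<xi> - w s \<xi>) \<le> C' * \<bar>t - s\<bar> * norm \<xi>"
        using onD by (simp add: mult_ac)
    qed
    have "C'-lipschitz_on UNIV w"
    proof (rule lipschitz_onI)
      fix t s :: real
      have "norm (w t - w s) \<le> C' * \<bar>t - s\<bar>"
        by (rule norm_blinfun_bound) (auto simp: C'0 blinfun.bilinear_simps all)
      then show "dist (w t) (w s) \<le> C' * dist t s" by (simp add: dist_norm dist_real_def)
    qed (rule C'0)
    then show "\<exists>L. L-lipschitz_on UNIV w" by blast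
  qed
  show ?thesis using part1 part2 part3 part4 by blast
qed

end
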